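(* Let $F$ be a field and $n\in\mathbb N\cup\{\infty\}$. Every almost identity PC-map $\varphi:\mathrm{UT}(n,F)\to\mathrm{UT}(n,F)$ is a central map, i.e. $\varphi(a)=af(a)$ for some function $f$ from $\mathrm{UT}(n,F)$ to its center $C$. In particular, for finite $n$ one has $\varphi(a)=a\,t_{1n}(f(a))$ for some function $f:\mathrm{UT}(n,F)\to F$, and for $n=\infty$, $\varphi$ is the identity.
   Context: $\mathrm{UT}(n,F)$ is the group of upper unitriangular $n\times n$ matrices over $F$ (for $n=\infty$: all $\mathbb N\times\mathbb N$ matrices with $1$ on the diagonal and $0$ below it). $e$ is the identity, $e_{ij}$ the matrix unit, $t_{ij}(\alpha)=e+\alpha e_{ij}$ ($i<j$). $[x,y]=xyx^{-1}y^{-1}$. A PC-map is a bijection $\varphi$ of the group with $\varphi([x,y])=[\varphi(x),\varphi(y)]$ for all $x,y$; it is almost identity if $\varphi(t_{ij}(\alpha))=t_{ij}(\alpha)$ for all $i<j$, $\alpha\in F$. The center $C$ of $\mathrm{UT}(n,F)$ is trivial if $n=\infty$ and is $\{t_{1n}(\alpha):\alpha\in F\}$ for finite $n$. *)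

theory Defs
  imports Main "HOL-Library.Extended_Nat"
begin

text \<open>Matrices over a field are functions nat => nat => 'a, indices start at 1.
  The size n is an extended natural number; n = \<infinity> gives N x N matrices.
  Entries outside the index range are 0.\<close>

type_synonym 'a mat = "nat \<Rightarrow> nat \<Rightarrow> 'a"

definition idx :: "enat \<Rightarrow> nat set" where
  "idx n = {i. 1 \<le> i \<and> enat i \<le> n}"

definition UT :: "enat \<Rightarrow> ('a::field) mat set" where
  "UT n = {A. (\<forall>i j. A i j \<noteq> 0 \<longrightarrow> i \<in> idx n \<and> j \<in> idx n \<and> i \<le> j)
               \<and> (\<forall>i \<in> idx n. A i i = 1)}"

text \<open>Product of upper triangular matrices: only finitely many terms are nonzero.\<close>
definition ut_mult :: "('a::field) mat \<Rightarrow> 'a mat \<Rightarrow> 'a mat" where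
  "ut_mult A B = (\<lambda>i j. \<Sum>k\<in>{i..j}. A i k * B k j)"

definition ut_one :: "enat \<Rightarrow> ('a::field) mat" where
  "ut_one n = (\<lambda>i j. if i = j \<and> i \<in> idx n then 1 else 0)"

definition ut_inv :: "enat \<Rightarrow> ('a::field) mat \<Rightarrow> 'a mat" where
  "ut_inv n A = (THE B. B \<in> UT n \<and> ut_mult A B = ut_one n)"

definition ut_comm :: "enat \<Rightarrow> ('a::field) mat \<Rightarrow> 'a mat \<Rightarrow> 'a mat" where
  "ut_comm n x y = ut_mult (ut_mult (ut_mult x y) (ut_inv n x)) (ut_inv n y)"

definition transv :: "enat \<Rightarrow> nat \<Rightarrow> nat \<Rightarrow> 'a::field \<Rightarrow> 'a mat" where
  "transv n i j \<alpha> = (\<lambda>p q. ut_one n p q + (if p = i \<and> q = j then \<alpha> else 0))"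

definition ut_center :: "enat \<Rightarrow> ('a::field) mat set" where
  "ut_center n = {c \<in> UT n. \<forall>x \<in> UT n. ut_mult c x = ut_mult x c}"

definition PC_map :: "enat \<Rightarrow> (('a::field) mat \<Rightarrow> 'a mat) \<Rightarrow> bool" where
  "PC_map n \<phi> \<longleftrightarrow> bij_betw \<phi> (UT n) (UT n) \<and>
     (\<forall>x \<in> UT n. \<forall>y \<in> UT n. \<phi> (ut_comm n x y) = ut_comm n (\<phi> x) (\<phi> y))"

definition almost_identity :: "enat \<Rightarrow> (('a::field) mat \<Rightarrow> 'a mat) \<Rightarrow> bool" where
  "almost_identity n \<phi> \<longleftrightarrow>
     (\<forall>i j \<alpha>. i \<in> idx n \<and> j \<in> idx n \<and> i < j \<longrightarrow> \<phi> (transv n i j \<alpha>) = transv n i j \<alpha>)"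

end

theory Submission
  imports Defs
begin

definition upper :: "('a::field) mat \<Rightarrow> bool" where
  "upper A \<longleftrightarrow> (\<forall>i j. A i j \<noteq> 0 \<longrightarrow> i \<le> j)"

lemma UT_D:
  assumes "A \<in> UT n" "A i j \<noteq> 0"
  shows "i \<in> idx n" "j \<in> idx n" "i \<le> j"
  using assms unfolding UT_def by auto

lemma UT_diag: "A \<in> UT n \<Longrightarrow> i \<in> idx n \<Longrightarrow> A i i = 1"
  unfolding UT_def by auto

lemma UT_upper: "A \<in> UT n \<Longrightarrow> upper A"
  unfolding UT_def upper_def by auto

lemma UT_lt0: "A \<in> UT n \<Longrightarrow> j < i \<Longrightarrow> A i j = 0"
  using UT_D(3) by fastforce

lemma UT_nidx1: "A \<in> UT n \<Longrightarrow> i \<notin> idx n \<Longrightarrow> A i j = 0"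
  using UT_D(1) by fastforce

lemma UT_nidx2: "A \<in> UT n \<Longrightarrow> j \<notin> idx n \<Longrightarrow> A i j = 0"
  using UT_D(2) by fastforce

lemma UT_I:
  assumes "\<And>i j. A i j \<noteq> 0 \<Longrightarrow> i \<in> idx n \<and> j \<in> idx n \<and> i \<le> j"
    and "\<And>i. i \<in> idx n \<Longrightarrow> A i i = 1"
  shows "A \<in> UT n"
  using assms unfolding UT_def by auto

lemma idx_0[simp]: "0 \<notin> idx n"
  by (simp add: idx_def)

lemma idx_le: "j \<in> idx n \<Longrightarrow> 1 \<le> i \<Longrightarrow> i \<le> j \<Longrightarrow> i \<in> idx n"
  unfolding idx_def using order_trans[of "enat i" "enat j" n] by auto

lemma UT_col0: "A \<in> UT n \<Longrightarrow> A i 0 = 0"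
  by (simp add: UT_nidx2)

lemma UT_row0: "A \<in> UT n \<Longrightarrow> A 0 j = 0"
  by (simp add: UT_nidx1)

lemma mult_sum:
  assumes "upper A" "upper B" "finite K" "{i..j} \<subseteq> K"
  shows "ut_mult A B i j = (\<Sum>k\<in>K. A i k * B k j)"
  unfolding ut_mult_def
proof (rule sum.mono_neutral_left[OF assms(3,4)])
  show "\<forall>k\<in>K - {i..j}. A i k * B k j = 0"
  proof
    fix k assume "k \<in> K - {i..j}"
    then have "k < i \<or> j < k" by auto
    then show "A i k * B k j = 0"
      using assms(1,2) unfolding upper_def by (metis leD mult_eq_0_iff)
  qed
qed

lemma upper_mult: "upper A \<Longrightarrow> upper B \<Longrightarrow> upper (ut_mult A B)"
  unfolding upper_def ut_mult_def by force

lemma mult_assoc: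
  assumes A: "upper A" and B: "upper B" and C: "upper C"
  shows "ut_mult (ut_mult A B) C = ut_mult A (ut_mult B C)"
proof (rule ext, rule ext)
  fix i j
  have "ut_mult (ut_mult A B) C i j = (\<Sum>k\<in>{i..j}. ut_mult A B i k * C k j)"
    by (simp add: ut_mult_def)
  also have "\<dots> = (\<Sum>k\<in>{i..j}. (\<Sum>l\<in>{i..j}. A i l * B l k) * C k j)"
  proof -
    have "\<And>k. k \<in> {i..j} \<Longrightarrow> ut_mult A B i k = (\<Sum>l\<in>{i..j}. A i l * B l k)"
      by (rule mult_sum[OF A B]) auto
    then show ?thesis by (auto intro: sum.cong)
  qed
  also have "\<dots> = (\<Sum>k\<in>{i..j}. \<Sum>l\<in>{i..j}. A i l * B l k * C k j)"
    by (simp add: sum_distrib_right)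
  also have "\<dots> = (\<Sum>l\<in>{i..j}. \<Sum>k\<in>{i..j}. A i l * B l k * C k j)"
    by (rule sum.swap)
  also have "\<dots> = (\<Sum>l\<in>{i..j}. A i l * (\<Sum>k\<in>{i..j}. B l k * C k j))"
    by (simp add: sum_distrib_left mult.assoc)
  also have "\<dots> = (\<Sum>l\<in>{i..j}. A i l * ut_mult B C l j)"
  proof -
    have "\<And>l. l \<in> {i..j} \<Longrightarrow> ut_mult B C l j = (\<Sum>k\<in>{i..j}. B l k * C k j)"
      by (rule mult_sum[OF B C]) auto
    then show ?thesis by (auto intro: sum.cong)
  qed
  also have "\<dots> = ut_mult A (ut_mult B C) i j"
    by (simp add: ut_mult_def)
  finally show "ut_mult (ut_mult A B) C i j = ut_mult A (ut_mult B C) i j" .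
qed

lemma one_UT: "ut_one n \<in> UT n"
  unfolding UT_def ut_one_def by auto

lemma one_apply: "ut_one n i j = (if i = j \<and> i \<in> idx n then 1 else 0)"
  by (simp add: ut_one_def)

lemma mult_one_left:
  assumes "A \<in> UT n" shows "ut_mult (ut_one n) A = A"
proof (rule ext, rule ext)
  fix i j
  have "ut_mult (ut_one n) A i j = (\<Sum>k\<in>{i..j}. (if k = i then (if i \<in> idx n then A i j else 0) else 0))"
    unfolding ut_mult_def by (rule sum.cong[OF refl]) (auto simp: ut_one_def)
  also have "\<dots> = A i j"
    using assms by (auto simp: UT_nidx1 UT_lt0)
  finally show "ut_mult (ut_one n) A i j = A i j" .
qed

lemma mult_one_right:
  assumes "A \<in> UT n" shows "ut_mult A (ut_one n) = A"
proof (rule ext, rule ext)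
  fix i j
  have "ut_mult A (ut_one n) i j = (\<Sum>k\<in>{i..j}. (if k = j then (if j \<in> idx n then A i j else 0) else 0))"
    unfolding ut_mult_def by (rule sum.cong[OF refl]) (auto simp: ut_one_def)
  also have "\<dots> = A i j"
    using assms by (auto simp: UT_nidx2 UT_lt0)
  finally show "ut_mult A (ut_one n) i j = A i j" .
qed

lemma mult_UT:
  assumes A: "A \<in> UT n" and B: "B \<in> UT n"
  shows "ut_mult A B \<in> UT n"
proof (rule UT_I)
  fix i j assume "ut_mult A B i j \<noteq> 0"
  then obtain k where k: "k \<in> {i..j}" "A i k * B k j \<noteq> 0"
    unfolding ut_mult_def by (meson sum.neutral)
  then show "i \<in> idx n \<and> j \<in> idx n \<and> i \<le> j"
    using UT_D[OF A, of i k] UT_D[OF B, of k j] by auto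
next
  fix i assume "i \<in> idx n"
  then show "ut_mult A B i i = 1" using A B by (simp add: ut_mult_def UT_diag)
qed


function rinv :: "enat \<Rightarrow> ('a::field) mat \<Rightarrow> nat \<Rightarrow> nat \<Rightarrow> 'a" where
  "rinv n A i j = (if i \<notin> idx n \<or> j \<notin> idx n \<or> j < i then 0 else if i = j then 1
      else - (\<Sum>k\<in>{Suc i..j}. A i k * rinv n A k j))"
  by pat_completeness auto
termination by (relation "measure (\<lambda>(n,A,i,j). j - i)") auto

declare rinv.simps[simp del]

lemma rinv_UT: "rinv n A \<in> UT n"
  by (rule UT_I) (auto simp: rinv.simps split: if_splits)

lemma rinv_right:
  assumes A: "A \<in> UT n" shows "ut_mult A (rinv n A) = ut_one n"
proof (rule ext, rule ext)
  fix i j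
  show "ut_mult A (rinv n A) i j = ut_one n i j"
  proof (cases "i \<in> idx n \<and> j \<in> idx n \<and> i \<le> j")
    case False
    then have "\<forall>k\<in>{i..j}. A i k * rinv n A k j = 0"
      using A by (auto simp: UT_nidx1 rinv.simps)
    then have "ut_mult A (rinv n A) i j = 0" unfolding ut_mult_def by (intro sum.neutral) auto
    moreover have "ut_one n i j = 0" using False by (auto simp: ut_one_def)
    ultimately show ?thesis by simp
  next
    case True
    have "ut_mult A (rinv n A) i j = A i i * rinv n A i j + (\<Sum>k\<in>{Suc i..j}. A i k * rinv n A k j)"
      unfolding ut_mult_def using True by (simp add: Icc_eq_insert_lb_nat)
    also have "\<dots> = ut_one n i j"
    proof (cases "i = j")
      case True then show ?thesis using \<open>i \<in> idx n \<and> j \<in> idx n \<and> i \<le> j\<close> A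
        by (simp add: UT_diag rinv.simps ut_one_def)
    next
      case False
      then have "rinv n A i j = - (\<Sum>k\<in>{Suc i..j}. A i k * rinv n A k j)"
        using True by (subst rinv.simps) auto
      then show ?thesis using True False A by (simp add: UT_diag ut_one_def)
    qed
    finally show ?thesis .
  qed
qed

lemma ex_rinv: "A \<in> UT n \<Longrightarrow> \<exists>B\<in>UT n. ut_mult A B = ut_one n"
  using rinv_UT rinv_right by blast

lemma right_inv_left:
  assumes A: "A \<in> UT n" and B: "B \<in> UT n" and AB: "ut_mult A B = ut_one n"
  shows "ut_mult B A = ut_one n"
proof -
  obtain C where C: "C \<in> UT n" "ut_mult B C = ut_one n" using ex_rinv[OF B] by blast
  have "A = ut_mult A (ut_mult B C)" using C A by (simp add: mult_one_right)
  also have "\<dots> = ut_mult (ut_mult A B) C"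
    using A B C by (simp add: mult_assoc UT_upper)
  also have "\<dots> = C" using AB C by (simp add: mult_one_left)
  finally show ?thesis using C by simp
qed

lemma inv_unique:
  assumes A: "A \<in> UT n" and B: "B \<in> UT n" and AB: "ut_mult A B = ut_one n"
    and B': "B' \<in> UT n" and AB': "ut_mult A B' = ut_one n"
  shows "B' = B"
proof -
  have BA: "ut_mult B A = ut_one n" by (rule right_inv_left[OF A B AB])
  have "B' = ut_mult (ut_mult B A) B'" using BA B' by (simp add: mult_one_left)
  also have "\<dots> = ut_mult B (ut_mult A B')" using A B B' by (simp add: mult_assoc UT_upper)
  also have "\<dots> = B" using AB' B by (simp add: mult_one_right)
  finally show ?thesis .
qed

lemma inv_prop:
  assumes A: "A \<in> UT n"
  shows "ut_inv n A \<in> UT n" "ut_mult A (ut_inv n A) = ut_one n" "ut_mult (ut_inv n A) A = ut_one n"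
proof -
  have "ut_inv n A = rinv n A"
    unfolding ut_inv_def
    by (rule the_equality) (auto intro: inv_unique[OF A rinv_UT rinv_right[OF A]] rinv_UT rinv_right[OF A])
  then show 1: "ut_inv n A \<in> UT n" "ut_mult A (ut_inv n A) = ut_one n"
    using rinv_UT rinv_right[OF A] by auto
  then show "ut_mult (ut_inv n A) A = ut_one n" using right_inv_left[OF A] by blast
qed

lemma assoc_UT: "A \<in> UT n \<Longrightarrow> B \<in> UT n \<Longrightarrow> C \<in> UT n \<Longrightarrow>
   ut_mult (ut_mult A B) C = ut_mult A (ut_mult B C)"
  by (rule mult_assoc) (auto intro: UT_upper)

lemma cancel_r: "P \<in> UT n \<Longrightarrow> x \<in> UT n \<Longrightarrow> ut_mult (ut_mult P x) (ut_inv n x) = P"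
  by (subst assoc_UT) (auto simp: inv_prop mult_one_right)

lemma cancel_l: "P \<in> UT n \<Longrightarrow> x \<in> UT n \<Longrightarrow> ut_mult (ut_mult P (ut_inv n x)) x = P"
  by (subst assoc_UT) (auto simp: inv_prop mult_one_right)

lemma comm_UT: "x \<in> UT n \<Longrightarrow> y \<in> UT n \<Longrightarrow> ut_comm n x y \<in> UT n"
  by (simp add: ut_comm_def mult_UT inv_prop)

lemma comm_char:
  assumes x: "x \<in> UT n" and y: "y \<in> UT n" and Z: "Z \<in> UT n"
  shows "ut_comm n x y = Z \<longleftrightarrow> ut_mult x y = ut_mult (ut_mult Z y) x"
proof
  assume "ut_comm n x y = Z"
  then have "ut_mult (ut_mult Z y) x
      = ut_mult (ut_mult (ut_mult (ut_mult (ut_mult x y) (ut_inv n x)) (ut_inv n y)) y) x"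
    by (simp add: ut_comm_def)
  also have "\<dots> = ut_mult (ut_mult (ut_mult x y) (ut_inv n x)) x"
    using x y by (simp add: cancel_l mult_UT inv_prop)
  also have "\<dots> = ut_mult x y"
    using x y by (simp add: cancel_l mult_UT inv_prop)
  finally show "ut_mult x y = ut_mult (ut_mult Z y) x" by simp
next
  assume h: "ut_mult x y = ut_mult (ut_mult Z y) x"
  have "ut_comm n x y = ut_mult (ut_mult (ut_mult (ut_mult Z y) x) (ut_inv n x)) (ut_inv n y)"
    by (simp add: ut_comm_def h)
  also have "\<dots> = Z" using x y Z by (simp add: cancel_r mult_UT)
  finally show "ut_comm n x y = Z" .
qed

lemma comm_eq_one:
  assumes x: "x \<in> UT n" and y: "y \<in> UT n"
  shows "ut_comm n x y = ut_one n \<longleftrightarrow> ut_mult x y = ut_mult y x"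
  using comm_char[OF x y one_UT] y by (simp add: mult_one_left)


definition colm :: "enat \<Rightarrow> nat \<Rightarrow> (nat \<Rightarrow> 'a::field) \<Rightarrow> 'a mat" where
  "colm n q v = (\<lambda>a b. ut_one n a b + (if b = q then v a else 0))"
definition row1 :: "enat \<Rightarrow> (nat \<Rightarrow> 'a::field) \<Rightarrow> 'a mat" where
  "row1 n v = (\<lambda>a b. ut_one n a b + (if a = 1 then v b else 0))"
definition cvec :: "nat \<Rightarrow> (nat \<Rightarrow> 'a::zero) \<Rightarrow> bool" where
  "cvec q v \<longleftrightarrow> (\<forall>a. v a \<noteq> 0 \<longrightarrow> 1 \<le> a \<and> a < q)"
definition rvec :: "enat \<Rightarrow> (nat \<Rightarrow> 'a::zero) \<Rightarrow> bool" where
  "rvec n v \<longleftrightarrow> (\<forall>b. v b \<noteq> 0 \<longrightarrow> 2 \<le> b \<and> b \<in> idx n)"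
definition vm :: "(nat \<Rightarrow> 'a::field) \<Rightarrow> 'a mat \<Rightarrow> nat \<Rightarrow> 'a" where
  "vm x g b = (\<Sum>k\<in>{..b}. x k * g k b)"
definition mv :: "nat \<Rightarrow> ('a::field) mat \<Rightarrow> (nat \<Rightarrow> 'a) \<Rightarrow> nat \<Rightarrow> 'a" where
  "mv q g v a = (\<Sum>k\<in>{..q}. g a k * v k)"

lemma sum_single:
  assumes "finite A" "m \<in> A" "\<And>k. k \<in> A \<Longrightarrow> k \<noteq> m \<Longrightarrow> f k = 0"
  shows "sum f A = f m"
proof -
  have "sum f A = f m + sum f (A - {m})" using assms by (simp add: sum.remove)
  also have "sum f (A - {m}) = 0" using assms by (intro sum.neutral) auto
  finally show ?thesis by simp
qed

lemma UT_col1: "g \<in> UT n \<Longrightarrow> a \<noteq> 1 \<Longrightarrow> g a 1 = 0"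
proof (rule ccontr)
  assume "g \<in> UT n" "a \<noteq> 1" "g a 1 \<noteq> 0"
  then have "a \<in> idx n" "a \<le> 1" using UT_D by blast+
  then show False using \<open>a \<noteq> 1\<close> by (auto simp: idx_def)
qed

lemma UT_col1': "g \<in> UT n \<Longrightarrow> a \<noteq> Suc 0 \<Longrightarrow> g a (Suc 0) = 0"
  using UT_col1 by (metis One_nat_def)

lemma cvecD: "cvec q v \<Longrightarrow> v a \<noteq> 0 \<Longrightarrow> 1 \<le> a \<and> a < q"
  by (auto simp: cvec_def)
lemma cvec_q: "cvec q v \<Longrightarrow> q \<le> a \<Longrightarrow> v a = 0" by (auto simp: cvec_def)
lemma cvec_0: "cvec q v \<Longrightarrow> v 0 = 0" by (auto simp: cvec_def)
lemma rvecD: "rvec n v \<Longrightarrow> v b \<noteq> 0 \<Longrightarrow> 2 \<le> b \<and> b \<in> idx n"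
  by (auto simp: rvec_def)
lemma rvec_01: "rvec n v \<Longrightarrow> v 0 = 0" "rvec n v \<Longrightarrow> v 1 = 0" by (auto simp: rvec_def)

lemma colm_UT:
  assumes q: "q \<in> idx n" and v: "cvec q v"
  shows "colm n q v \<in> UT n"
proof (rule UT_I)
  fix i j assume h: "colm n q v i j \<noteq> 0"
  show "i \<in> idx n \<and> j \<in> idx n \<and> i \<le> j"
  proof (cases "j = q \<and> v i \<noteq> 0")
    case True
    then have "1 \<le> i" "i < q" using cvecD[OF v] by auto
    then show ?thesis using True q idx_le[OF q] by auto
  next
    case False
    then have "colm n q v i j = ut_one n i j" by (auto simp: colm_def)
    then have "(ut_one n i j :: 'a) \<noteq> 0" using h by metis
    then show ?thesis by (auto simp: ut_one_def split: if_splits)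
  qed
next
  fix i assume "i \<in> idx n" then show "colm n q v i i = 1"
    using cvec_q[OF v, of q] by (auto simp: colm_def ut_one_def)
qed

lemma row1_UT:
  assumes one: "1 \<in> idx n" and v: "rvec n v"
  shows "row1 n v \<in> UT n"
proof (rule UT_I)
  fix i j assume h: "row1 n v i j \<noteq> 0"
  show "i \<in> idx n \<and> j \<in> idx n \<and> i \<le> j"
  proof (cases "i = 1 \<and> v j \<noteq> 0")
    case True
    then show ?thesis using rvecD[OF v, of j] one by auto
  next
    case False
    then have "row1 n v i j = ut_one n i j" by (auto simp: row1_def)
    then have "(ut_one n i j :: 'a) \<noteq> 0" using h by metis
    then show ?thesis by (auto simp: ut_one_def split: if_splits)
  qed
next
  fix i assume "i \<in> idx n" then show "row1 n v i i = 1"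
    using rvec_01[OF v] by (auto simp: row1_def ut_one_def)
qed

lemma transv_colm: "s \<noteq> q \<Longrightarrow> transv n s q \<beta> = colm n q (\<lambda>a. if a = s then \<beta> else 0)"
  by (auto simp: transv_def colm_def)

lemma transv_row1: "q \<noteq> 1 \<Longrightarrow> transv n 1 q \<beta> = row1 n (\<lambda>b. if b = q then \<beta> else 0)"
  by (rule ext)+ (auto simp: transv_def row1_def)

lemma colm_inj: "colm n q u = colm n q v \<Longrightarrow> u = v"
proof
  fix a assume "colm n q u = colm n q v"
  then have "colm n q u a q = colm n q v a q" by simp
  then show "u a = v a" by (simp add: colm_def)
qed

lemma row1_inj: "row1 n u = row1 n v \<Longrightarrow> u = v"
proof
  fix b assume "row1 n u = row1 n v"
  then have "row1 n u 1 b = row1 n v 1 b" by simp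
  then show "u b = v b" by (simp add: row1_def)
qed

lemma colm_zero: "colm n q (\<lambda>_. 0) = ut_one n"
  by (simp add: colm_def)
lemma row1_zero: "row1 n (\<lambda>_. 0) = ut_one n"
  by (simp add: row1_def)

lemma sum_one_right:
  assumes g: "g \<in> UT n" "b \<in> K" "finite K"
  shows "(\<Sum>k\<in>K. g a k * ut_one n k b) = g a b"
proof -
  have "(\<Sum>k\<in>K. g a k * ut_one n k b) = g a b * ut_one n b b"
    by (rule sum_single) (use g in \<open>auto simp: ut_one_def\<close>)
  also have "\<dots> = g a b" using g by (auto simp: ut_one_def UT_nidx2)
  finally show ?thesis .
qed

lemma sum_one_left:
  assumes g: "g \<in> UT n" "finite K" "a \<le> b \<Longrightarrow> a \<in> K"
  shows "(\<Sum>k\<in>K. ut_one n a k * g k b) = g a b"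
proof (cases "a \<le> b")
  case True
  have "(\<Sum>k\<in>K. ut_one n a k * g k b) = ut_one n a a * g a b"
    by (rule sum_single) (use g True in \<open>auto simp: ut_one_def\<close>)
  also have "\<dots> = g a b" using g by (auto simp: ut_one_def UT_nidx1)
  finally show ?thesis .
next
  case False
  then show ?thesis using g by (auto simp: ut_one_def UT_lt0 intro!: sum.neutral)
qed

lemma upper_colm: "cvec q v \<Longrightarrow> upper (colm n q v)"
  by (auto simp: upper_def colm_def ut_one_def cvec_def split: if_splits)

lemma upper_row1: "rvec n v \<Longrightarrow> upper (row1 n v)"
  by (auto simp: upper_def row1_def ut_one_def rvec_def split: if_splits)

lemma M1:
  assumes g: "g \<in> UT n" and v: "cvec q v"
  shows "ut_mult g (colm n q v) a b = g a b + (if b = q then mv q g v a else 0)"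
proof -
  have "ut_mult g (colm n q v) a b = (\<Sum>k\<in>{..b}. g a k * colm n q v k b)"
    by (rule mult_sum) (auto simp: UT_upper[OF g] upper_colm[OF v])
  also have "\<dots> = (\<Sum>k\<in>{..b}. g a k * ut_one n k b) + (if b = q then (\<Sum>k\<in>{..b}. g a k * v k) else 0)"
    by (cases "b = q") (simp_all add: colm_def distrib_left sum.distrib)
  also have "\<dots> = g a b + (if b = q then mv q g v a else 0)"
    by (simp add: sum_one_right[OF g] mv_def)
  finally show ?thesis .
qed

lemma M2:
  assumes g: "g \<in> UT n" and u: "cvec q u"
  shows "ut_mult (colm n q u) g a b = g a b + u a * g q b"
proof -
  have "ut_mult (colm n q u) g a b = (\<Sum>k\<in>{..max b q}. colm n q u a k * g k b)"
    by (rule mult_sum) (auto simp: UT_upper[OF g] upper_colm[OF u])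
  also have "\<dots> = (\<Sum>k\<in>{..max b q}. ut_one n a k * g k b + (if k = q then u a * g q b else 0))"
    by (rule sum.cong[OF refl]) (simp add: colm_def distrib_right)
  also have "\<dots> = (\<Sum>k\<in>{..max b q}. ut_one n a k * g k b) + (\<Sum>k\<in>{..max b q}. (if k = q then u a * g q b else 0))"
    by (simp add: sum.distrib)
  also have "\<dots> = g a b + u a * g q b"
    by (subst sum_one_left[OF g]) auto
  finally show ?thesis .
qed

lemma vm_one: "(\<And>k. x k \<noteq> 0 \<Longrightarrow> k \<in> idx n) \<Longrightarrow> vm x (ut_one n) b = x b"
  unfolding vm_def by (subst sum_single[where m=b]) (auto simp: ut_one_def)

lemma M3:
  assumes g: "g \<in> UT n" and one: "1 \<in> idx n" and v: "rvec n v"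
  shows "ut_mult g (row1 n v) a b = g a b + (if a = 1 then v b else 0)"
proof -
  have "ut_mult g (row1 n v) a b = (\<Sum>k\<in>{..b}. g a k * row1 n v k b)"
    by (rule mult_sum) (auto simp: UT_upper[OF g] upper_row1[OF v])
  also have "\<dots> = (\<Sum>k\<in>{..b}. g a k * ut_one n k b + (if k = 1 then g a 1 * v b else 0))"
    by (rule sum.cong[OF refl]) (simp add: row1_def distrib_left)
  also have "\<dots> = (\<Sum>k\<in>{..b}. g a k * ut_one n k b) + (\<Sum>k\<in>{..b}. if k = 1 then g a 1 * v b else 0)"
    by (simp add: sum.distrib)
  also have "\<dots> = g a b + (if a = 1 then v b else 0)"
  proof -
    have "(\<Sum>k\<in>{..b}. if k = 1 then g a 1 * v b else 0) = (if a = 1 then v b else 0)"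
    proof (cases "1 \<le> b")
      case True then show ?thesis using g one by (auto simp: UT_diag UT_col1 UT_col1')
    next
      case False then have "b = 0" by simp
      then show ?thesis using rvec_01[OF v] by simp
    qed
    then show ?thesis by (simp add: sum_one_right[OF g])
  qed
  finally show ?thesis .
qed

lemma M4:
  assumes g: "g \<in> UT n" and x: "rvec n x"
  shows "ut_mult (row1 n x) g a b = g a b + (if a = 1 then vm x g b else 0)"
proof -
  have "ut_mult (row1 n x) g a b = (\<Sum>k\<in>{..b}. row1 n x a k * g k b)"
    by (rule mult_sum) (auto simp: UT_upper[OF g] upper_row1[OF x])
  also have "\<dots> = (\<Sum>k\<in>{..b}. ut_one n a k * g k b) + (if a = 1 then vm x g b else 0)"
    by (cases "a = 1") (simp_all add: row1_def distrib_right sum.distrib vm_def)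
  also have "\<dots> = g a b + (if a = 1 then vm x g b else 0)"
    by (subst sum_one_left[OF g]) auto
  finally show ?thesis .
qed


lemma vm_add: "vm (\<lambda>k. x k + y k) g b = vm x g b + vm y g b"
  by (simp add: vm_def distrib_right sum.distrib)

lemma vm_diff: "vm (\<lambda>k. x k - y k) g b = vm x g b - vm y g b"
  by (simp add: vm_def left_diff_distrib sum_subtractf)

lemma vm_delta: "upper g \<Longrightarrow> vm (\<lambda>k. if k = j then \<alpha> else 0) g b = \<alpha> * g j b"
proof (cases "j \<le> b")
  case True
  then show ?thesis unfolding vm_def by (subst sum_single[where m=j]) auto
next
  case False
  assume "upper g"
  then have "g j b = 0" using False unfolding upper_def by force
  then show ?thesis unfolding vm_def using False by (auto intro!: sum.neutral)
qed

lemma mult_vm: "upper Z \<Longrightarrow> upper g \<Longrightarrow> ut_mult Z g i b = vm (\<lambda>k. Z i k) g b"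
  unfolding vm_def by (rule mult_sum) auto

lemma vm_lower:
  assumes g: "g \<in> UT n" and x: "\<And>k. x k \<noteq> 0 \<Longrightarrow> k \<in> idx n"
    and h: "\<And>b. b < c \<Longrightarrow> vm x g b = 0"
  shows "b < c \<Longrightarrow> x b = 0"
proof (induction b rule: less_induct)
  case (less b)
  have "vm x g b = x b * g b b"
    unfolding vm_def
  proof (rule sum_single)
    fix k assume "k \<in> {..b}" "k \<noteq> b"
    then have "k < b" by auto
    then have "x k = 0" using less.IH less.prems by auto
    then show "x k * g k b = 0" by simp
  qed auto
  then show ?case
  proof (cases "x b = 0")
    case False
    then have "b \<in> idx n" using x by blast
    then show ?thesis using h[OF less.prems] \<open>vm x g b = x b * g b b\<close> g by (simp add: UT_diag)
  qed simp
qed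

lemma vm_zero:
  assumes g: "g \<in> UT n" and x: "\<And>k. x k \<noteq> 0 \<Longrightarrow> k \<in> idx n"
    and h: "\<And>b. vm x g b = 0"
  shows "x b = 0"
  by (rule vm_lower[OF g x, where c="Suc b"]) (auto simp: h)

lemma rvec_idx: "rvec n x \<Longrightarrow> x k \<noteq> 0 \<Longrightarrow> k \<in> idx n"
  by (auto simp: rvec_def)

lemma rvec_add: "rvec n (x::nat\<Rightarrow>'a::field) \<Longrightarrow> rvec n y \<Longrightarrow> rvec n (\<lambda>k. x k + y k)"
  unfolding rvec_def
proof (intro allI impI)
  fix b assume "\<forall>b. x b \<noteq> 0 \<longrightarrow> 2 \<le> b \<and> b \<in> idx n" "\<forall>b. y b \<noteq> 0 \<longrightarrow> 2 \<le> b \<and> b \<in> idx n" "x b + y b \<noteq> 0"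
  moreover have "x b \<noteq> 0 \<or> y b \<noteq> 0" using \<open>x b + y b \<noteq> 0\<close> by auto
  ultimately show "2 \<le> b \<and> b \<in> idx n" by blast
qed

lemma cvec_add: "cvec q (x::nat\<Rightarrow>'a::field) \<Longrightarrow> cvec q y \<Longrightarrow> cvec q (\<lambda>k. x k + y k)"
  unfolding cvec_def
proof (intro allI impI)
  fix b assume "\<forall>b. x b \<noteq> 0 \<longrightarrow> 1 \<le> b \<and> b < q" "\<forall>b. y b \<noteq> 0 \<longrightarrow> 1 \<le> b \<and> b < q" "x b + y b \<noteq> 0"
  moreover have "x b \<noteq> 0 \<or> y b \<noteq> 0" using \<open>x b + y b \<noteq> 0\<close> by auto
  ultimately show "1 \<le> b \<and> b < q" by blast
qed

lemma vm_row1: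
  assumes v: "rvec n v" and x: "\<And>k. x k \<noteq> 0 \<Longrightarrow> k \<in> idx n"
  shows "vm x (row1 n v) b = x b + x 1 * v b"
proof -
  have "vm x (row1 n v) b = (\<Sum>k\<in>{..b}. x k * ut_one n k b + (if k = 1 then x 1 * v b else 0))"
    unfolding vm_def row1_def by (rule sum.cong[OF refl]) (simp add: distrib_left)
  also have "\<dots> = vm x (ut_one n) b + (\<Sum>k\<in>{..b}. (if k = 1 then x 1 * v b else 0))"
    by (simp add: sum.distrib vm_def)
  also have "(\<Sum>k\<in>{..b}. (if k = 1 then x 1 * v b else 0)) = x 1 * v b"
  proof (cases "1 \<le> b")
    case True then show ?thesis by (subst sum_single[where m=1]) auto
  next
    case False then have "b = 0" by simp
    then show ?thesis using rvec_01[OF v] by simp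
  qed
  finally show ?thesis using vm_one[OF x] by simp
qed

lemma vm_colm:
  assumes u: "cvec q u" and x: "\<And>k. x k \<noteq> 0 \<Longrightarrow> k \<in> idx n"
  shows "vm x (colm n q u) b = x b + (if b = q then (\<Sum>k\<in>{..q}. x k * u k) else 0)"
proof -
  have "vm x (colm n q u) b = vm x (ut_one n) b + (if b = q then (\<Sum>k\<in>{..q}. x k * u k) else 0)"
    unfolding vm_def colm_def by (cases "b = q") (simp_all add: distrib_left sum.distrib)
  then show ?thesis using vm_one[OF x] by simp
qed

lemma row1_mult:
  assumes one: "1 \<in> idx n" and w: "rvec n w" and v: "rvec n v"
  shows "ut_mult (row1 n w) (row1 n v) = row1 n (\<lambda>b. w b + v b)"
proof (rule ext, rule ext)
  fix a b
  have "ut_mult (row1 n w) (row1 n v) a b = row1 n v a b + (if a = 1 then vm w (row1 n v) b else 0)"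
    by (rule M4[OF row1_UT[OF one v] w])
  also have "vm w (row1 n v) b = w b"
    using vm_row1[OF v rvec_idx[OF w]] rvec_01[OF w] by simp
  finally show "ut_mult (row1 n w) (row1 n v) a b = row1 n (\<lambda>b. w b + v b) a b"
    by (simp add: row1_def)
qed

lemma colm_mult:
  assumes q: "q \<in> idx n" and u: "cvec q u" and v: "cvec q v"
  shows "ut_mult (colm n q u) (colm n q v) = colm n q (\<lambda>a. u a + v a)"
proof (rule ext, rule ext)
  fix a b
  have "ut_mult (colm n q u) (colm n q v) a b = colm n q v a b + u a * colm n q v q b"
    by (rule M2[OF colm_UT[OF q v] u])
  also have "colm n q v q b = (if b = q then 1 else 0)"
    using q cvec_q[OF v, of q] by (auto simp: colm_def ut_one_def)
  finally show "ut_mult (colm n q u) (colm n q v) a b = colm n q (\<lambda>a. u a + v a) a b"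
    by (simp add: colm_def)
qed

lemma RR:
  assumes g: "g \<in> UT n" and one: "1 \<in> idx n" and v: "rvec n v" and w: "rvec n w"
  shows "ut_comm n g (row1 n v) = row1 n w \<longleftrightarrow> (\<forall>b. vm (\<lambda>k. w k + v k) g b = v b)"
proof -
  have wv: "rvec n (\<lambda>k. w k + v k)" by (rule rvec_add[OF w v])
  have "ut_comm n g (row1 n v) = row1 n w \<longleftrightarrow>
      ut_mult g (row1 n v) = ut_mult (row1 n (\<lambda>k. w k + v k)) g"
    by (simp add: comm_char[OF g row1_UT[OF one v] row1_UT[OF one w]] row1_mult[OF one w v])
  also have "\<dots> \<longleftrightarrow> (\<forall>b. vm (\<lambda>k. w k + v k) g b = v b)"
  proof
    assume h: "ut_mult g (row1 n v) = ut_mult (row1 n (\<lambda>k. w k + v k)) g"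
    show "\<forall>b. vm (\<lambda>k. w k + v k) g b = v b"
    proof
      fix b
      have "ut_mult g (row1 n v) 1 b = ut_mult (row1 n (\<lambda>k. w k + v k)) g 1 b" using h by simp
      then show "vm (\<lambda>k. w k + v k) g b = v b"
        by (simp add: M3[OF g one v] M4[OF g wv])
    qed
  next
    assume h: "\<forall>b. vm (\<lambda>k. w k + v k) g b = v b"
    show "ut_mult g (row1 n v) = ut_mult (row1 n (\<lambda>k. w k + v k)) g"
      by (rule ext, rule ext) (simp add: M3[OF g one v] M4[OF g wv] h)
  qed
  finally show ?thesis .
qed

lemma CL:
  assumes g: "g \<in> UT n" and q: "q \<in> idx n" and gq: "\<And>b. b \<noteq> q \<Longrightarrow> g q b = 0"
    and v: "cvec q v" and u: "cvec q u"
  shows "ut_comm n g (colm n q v) = colm n q u \<longleftrightarrow> (\<forall>a. mv q g v a = u a + v a)"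
proof -
  have uv: "cvec q (\<lambda>k. u k + v k)" by (rule cvec_add[OF u v])
  have gqb: "g q b = (if b = q then 1 else 0)" for b using gq g q by (auto simp: UT_diag)
  have "ut_comm n g (colm n q v) = colm n q u \<longleftrightarrow>
      ut_mult g (colm n q v) = ut_mult (colm n q (\<lambda>k. u k + v k)) g"
    by (simp add: comm_char[OF g colm_UT[OF q v] colm_UT[OF q u]] colm_mult[OF q u v])
  also have "\<dots> \<longleftrightarrow> (\<forall>a. mv q g v a = u a + v a)"
  proof
    assume h: "ut_mult g (colm n q v) = ut_mult (colm n q (\<lambda>k. u k + v k)) g"
    show "\<forall>a. mv q g v a = u a + v a"
    proof
      fix a
      have "ut_mult g (colm n q v) a q = ut_mult (colm n q (\<lambda>k. u k + v k)) g a q" using h by simp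
      then show "mv q g v a = u a + v a"
        by (simp add: M1[OF g v] M2[OF g uv] gqb)
    qed
  next
    assume h: "\<forall>a. mv q g v a = u a + v a"
    show "ut_mult g (colm n q v) = ut_mult (colm n q (\<lambda>k. u k + v k)) g"
      by (rule ext, rule ext) (simp add: M1[OF g v] M2[OF g uv] h gqb)
  qed
  finally show ?thesis .
qed

lemma rvec_delta: "m \<in> idx n \<Longrightarrow> 2 \<le> m \<Longrightarrow> rvec n (\<lambda>b. if b = m then \<beta> else 0)"
  by (auto simp: rvec_def)

lemma rvec_zero: "rvec n (\<lambda>_. 0)" by (simp add: rvec_def)
lemma cvec_zero: "cvec q (\<lambda>_. 0)" by (simp add: cvec_def)
lemma cvec_delta: "1 \<le> s \<Longrightarrow> s < q \<Longrightarrow> cvec q (\<lambda>a. if a = s then \<beta> else 0)"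
  by (auto simp: cvec_def)

lemma R0:
  assumes y: "y \<in> UT n" and one: "1 \<in> idx n" and m: "2 \<le> m" "m \<in> idx n"
  shows "ut_comm n y (transv n 1 m 1) = ut_one n \<longleftrightarrow> (\<forall>b. b \<noteq> m \<longrightarrow> y m b = 0)"
proof -
  have t: "transv n 1 m 1 = row1 n (\<lambda>b. if b = m then 1 else 0)"
    using m by (intro transv_row1) auto
  have "ut_comm n y (transv n 1 m 1) = ut_one n \<longleftrightarrow>
      (\<forall>b. vm (\<lambda>k. 0 + (if k = m then 1 else 0)) y b = (if b = m then 1 else 0))"
    unfolding t using RR[OF y one rvec_delta[OF m(2,1)] rvec_zero] by (simp add: row1_zero)
  also have "\<dots> \<longleftrightarrow> (\<forall>b. y m b = (if b = m then 1 else 0))"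
    using vm_delta[OF UT_upper[OF y], of m 1] by simp
  also have "\<dots> \<longleftrightarrow> (\<forall>b. b \<noteq> m \<longrightarrow> y m b = 0)"
    using UT_diag[OF y m(2)] by auto
  finally show ?thesis .
qed

lemma mv_delta: "j \<le> q \<Longrightarrow> mv q g (\<lambda>k. if k = j then \<alpha> else 0) a = g a j * \<alpha>"
  unfolding mv_def by (subst sum_single[where m=j]) auto


lemma one_idx_iff: "1 \<in> idx n \<longleftrightarrow> 1 \<le> n"
  by (simp add: idx_def one_enat_def)

lemma transv_UT: "i \<in> idx n \<Longrightarrow> j \<in> idx n \<Longrightarrow> i < j \<Longrightarrow> transv n i j \<alpha> \<in> UT n"
  by (subst transv_colm) (auto intro!: colm_UT cvec_delta simp: idx_def)

lemma comm_self: "x \<in> UT n \<Longrightarrow> ut_comm n x x = ut_one n"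
  by (simp add: comm_eq_one)

lemma rows_triv_row1:
  assumes Z: "Z \<in> UT n" and one: "1 \<in> idx n" and r: "\<And>i b. 2 \<le> i \<Longrightarrow> Z i b = ut_one n i b"
  shows "Z = row1 n (\<lambda>b. if 2 \<le> b then Z 1 b else 0)" "rvec n (\<lambda>b. if 2 \<le> b then Z 1 b else 0)"
proof -
  show "Z = row1 n (\<lambda>b. if 2 \<le> b then Z 1 b else 0)"
  proof (rule ext, rule ext)
    fix a b
    show "Z a b = row1 n (\<lambda>b. if 2 \<le> b then Z 1 b else 0) a b"
    proof (cases "a = 1")
      case True
      then show ?thesis using Z one
        by (cases "b = 0"; cases "b = 1") (auto simp: row1_def ut_one_def UT_col0 UT_diag)
    next
      case False
      then show ?thesis
      proof (cases "a = 0")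
        case True then show ?thesis using Z by (simp add: row1_def ut_one_def UT_row0)
      next
        case False then have "2 \<le> a" using \<open>a \<noteq> 1\<close> by simp
        then show ?thesis using r \<open>a \<noteq> 1\<close> by (simp add: row1_def)
      qed
    qed
  qed
  show "rvec n (\<lambda>b. if 2 \<le> b then Z 1 b else 0)"
    unfolding rvec_def using UT_D(2)[OF Z] by auto
qed

lemma vm_transv:
  assumes x: "\<And>k. x k \<noteq> 0 \<Longrightarrow> k \<in> idx n" and sr: "s < r"
  shows "vm x (transv n s r \<beta>) b = x b + (if b = r then x s * \<beta> else 0)"
proof -
  have "vm x (transv n s r \<beta>) b = (\<Sum>k\<in>{..b}. x k * ut_one n k b + (if k = s then (if b = r then x s * \<beta> else 0) else 0))"
    unfolding vm_def transv_def by (rule sum.cong[OF refl]) (auto simp: distrib_left)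
  also have "\<dots> = vm x (ut_one n) b + (if b = r then x s * \<beta> else 0)"
    using sr by (simp add: sum.distrib vm_def)
  finally show ?thesis using vm_one[OF x] by simp
qed

locale pcm =
  fixes n :: enat and \<phi> :: "('a::field) mat \<Rightarrow> 'a mat"
  assumes n1: "1 \<le> n" and PC: "PC_map n \<phi>" and AI: "almost_identity n \<phi>"
begin

lemma one: "1 \<in> idx n" using n1 one_idx_iff by blast

lemma phi_UT: "x \<in> UT n \<Longrightarrow> \<phi> x \<in> UT n"
  using PC unfolding PC_map_def bij_betw_def by blast

lemma phi_comm: "x \<in> UT n \<Longrightarrow> y \<in> UT n \<Longrightarrow> \<phi> (ut_comm n x y) = ut_comm n (\<phi> x) (\<phi> y)"
  using PC unfolding PC_map_def by blast

lemma phi_one: "\<phi> (ut_one n) = ut_one n"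
proof -
  have "\<phi> (ut_one n) = \<phi> (ut_comm n (ut_one n) (ut_one n))" by (simp add: comm_self one_UT)
  also have "\<dots> = ut_comm n (\<phi> (ut_one n)) (\<phi> (ut_one n))" by (simp add: phi_comm one_UT)
  also have "\<dots> = ut_one n" by (simp add: comm_self phi_UT one_UT)
  finally show ?thesis .
qed

lemma phi_t: "i \<in> idx n \<Longrightarrow> j \<in> idx n \<Longrightarrow> i < j \<Longrightarrow> \<phi> (transv n i j \<alpha>) = transv n i j \<alpha>"
  using AI unfolding almost_identity_def by blast

lemma phi_row1_delta: "q \<in> idx n \<Longrightarrow> 2 \<le> q \<Longrightarrow>
   \<phi> (row1 n (\<lambda>b. if b = q then \<beta> else 0)) = row1 n (\<lambda>b. if b = q then \<beta> else 0)"
proof -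
  assume q: "q \<in> idx n" "2 \<le> q"
  have e: "transv n 1 q \<beta> = row1 n (\<lambda>b. if b = q then \<beta> else 0)" using q by (intro transv_row1) auto
  have "\<phi> (transv n 1 q \<beta>) = transv n 1 q \<beta>" using q one by (intro phi_t) auto
  then show ?thesis using e by metis
qed

lemma phi_colm_delta: "q \<in> idx n \<Longrightarrow> 1 \<le> s \<Longrightarrow> s < q \<Longrightarrow>
   \<phi> (colm n q (\<lambda>a. if a = s then \<beta> else 0)) = colm n q (\<lambda>a. if a = s then \<beta> else 0)"
proof -
  assume q: "q \<in> idx n" "1 \<le> s" "s < q"
  have e: "transv n s q \<beta> = colm n q (\<lambda>a. if a = s then \<beta> else 0)" using q by (intro transv_colm) auto
  have "\<phi> (transv n s q \<beta>) = transv n s q \<beta>" using q idx_le[of q n s] by (intro phi_t) auto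
  then show ?thesis using e by metis
qed

lemma T_row:
  assumes s: "2 \<le> s" "Suc s \<in> idx n" and v: "rvec n v"
  shows "ut_comm n (transv n s (Suc s) 1) (row1 n v) = row1 n (\<lambda>b. if b = Suc s then - v s else 0)"
proof -
  have sidx: "s \<in> idx n" using idx_le[OF s(2), of s] s by auto
  let ?w = "\<lambda>b. if b = Suc s then - v s else 0"
  have w: "rvec n ?w" using s by (intro rvec_delta) auto
  have t: "transv n s (Suc s) 1 = colm n (Suc s) (\<lambda>a. if a = s then 1 else 0)"
    by (simp add: transv_colm)
  have cv: "cvec (Suc s) (\<lambda>a. if a = s then (1::'a) else 0)" using s by (intro cvec_delta) auto
  show ?thesis
  proof (subst RR[OF transv_UT[OF sidx s(2)] one v w], simp, intro allI)
    fix b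
    have x: "\<And>k. ?w k + v k \<noteq> 0 \<Longrightarrow> k \<in> idx n"
      using rvec_add[OF w v] rvec_idx by blast
    show "vm (\<lambda>k. ?w k + v k) (transv n s (Suc s) 1) b = v b"
      by (subst vm_transv[OF x]) auto
  qed
qed

lemma phi_row1:
  assumes v: "rvec n v"
  shows "\<exists>v'. rvec n v' \<and> \<phi> (row1 n v) = row1 n v' \<and> (\<forall>s. 2 \<le> s \<longrightarrow> Suc s \<in> idx n \<longrightarrow> v' s = v s)"
proof -
  let ?x = "row1 n v"
  have x: "?x \<in> UT n" by (rule row1_UT[OF one v])
  define y where "y = \<phi> ?x"
  have y: "y \<in> UT n" unfolding y_def by (rule phi_UT[OF x])
  have rows: "y m b = 0" if m: "2 \<le> m" "m \<in> idx n" and b: "b \<noteq> m" for m b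
  proof -
    have t: "transv n 1 m 1 \<in> UT n" using m one by (intro transv_UT) auto
    have "ut_comm n ?x (transv n 1 m 1) = ut_one n"
      using R0[OF x one m] m by (auto simp: row1_def ut_one_def)
    then have "ut_comm n y (transv n 1 m 1) = ut_one n"
      using phi_comm[OF x t] phi_t[of 1 m 1] m one phi_one unfolding y_def by auto
    then show ?thesis using R0[OF y one m] b by blast
  qed
  define v' where "v' = (\<lambda>b. if 2 \<le> b then y 1 b else 0)"
  have ytriv: "y i b = ut_one n i b" if "2 \<le> i" for i b
  proof (cases "i \<in> idx n")
    case True then show ?thesis using rows[OF that True] y UT_diag[OF y True]
      by (cases "b = i") (auto simp: ut_one_def)
  next
    case False then show ?thesis using y by (simp add: UT_nidx1 ut_one_def)
  qed
  have yeq: "y = row1 n v'" and v': "rvec n v'"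
    using rows_triv_row1[OF y one ytriv] unfolding v'_def by auto
  have vals: "v' s = v s" if s: "2 \<le> s" "Suc s \<in> idx n" for s
  proof -
    have sidx: "s \<in> idx n" using idx_le[OF s(2), of s] s by auto
    have t: "transv n s (Suc s) 1 \<in> UT n" by (rule transv_UT[OF sidx s(2)]) simp
    have "row1 n (\<lambda>b. if b = Suc s then - v s else 0) = \<phi> (ut_comm n (transv n s (Suc s) 1) ?x)"
      using T_row[OF s v] phi_row1_delta[of "Suc s" "- v s"] s by simp
    also have "\<dots> = ut_comm n (transv n s (Suc s) 1) (row1 n v')"
      using phi_comm[OF t x] phi_t[OF sidx s(2), of 1] yeq unfolding y_def by simp
    also have "\<dots> = row1 n (\<lambda>b. if b = Suc s then - v' s else 0)"
      by (rule T_row[OF s v'])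
    finally have "(\<lambda>b. if b = Suc s then - v s else (0::'a)) = (\<lambda>b. if b = Suc s then - v' s else 0)"
      by (rule row1_inj)
    then show ?thesis by (metis neg_equal_iff_equal)
  qed
  show ?thesis using v' yeq vals unfolding y_def by blast
qed

end

lemma idx_enat: "i \<in> idx (enat N) \<longleftrightarrow> 1 \<le> i \<and> i \<le> N"
  by (simp add: idx_def)

lemma idx_inf: "i \<in> idx \<infinity> \<longleftrightarrow> 1 \<le> i"
  by (simp add: idx_def)

definition halt :: "nat \<Rightarrow> ('a::field) mat" where
  "halt N a b = (if a = b \<and> 1 \<le> a \<and> a \<le> N then 1 else if 2 \<le> a \<and> a < b \<and> b \<le> N then (-1)^(b-a) else 0)"

lemma halt_UT: "halt N \<in> UT (enat N)"
  by (rule UT_I) (auto simp: halt_def idx_enat split: if_splits)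

lemma halt_low: "b < a \<Longrightarrow> halt N a b = 0"
  by (simp add: halt_def)

lemma halt_rec:
  assumes m: "2 \<le> m" "m \<le> N"
  shows "halt N m b + (if Suc m \<le> N then halt N (Suc m) b else 0) = (if b = m then (1::'a::field) else 0)"
proof -
  consider "b < m" | "b = m" | "b = Suc m" | "Suc m < b"  by linarith
  then show ?thesis
  proof cases
    case 4
    then have e: "b - m = Suc (b - Suc m)" by simp
    show ?thesis
    proof (cases "b \<le> N")
      case True then show ?thesis using 4 m by (auto simp: halt_def e)
    next
      case False then show ?thesis using 4 m by (auto simp: halt_def)
    qed
  qed (use m in \<open>auto simp: halt_def\<close>)
qed

definition Erec :: "nat \<Rightarrow> ('a::field) mat \<Rightarrow> bool" where
  "Erec N G \<longleftrightarrow> (\<forall>m b. 2 \<le> m \<longrightarrow> m \<le> N \<longrightarrow>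
     G m b + (if Suc m \<le> N then G (Suc m) b else 0) = (if b = m then 1 else 0))"

lemma Erec_halt: "Erec N (halt N)"
  unfolding Erec_def using halt_rec by blast

lemma Erec_uniq:
  assumes G1: "Erec N G1" and G2: "Erec N G2"
  shows "2 \<le> m \<Longrightarrow> m \<le> N \<Longrightarrow> G1 m b = G2 m b"
proof (induction "N - m" arbitrary: m rule: less_induct)
  case less
  show ?case
  proof (cases "Suc m \<le> N")
    case True
    have ih: "G1 (Suc m) b = G2 (Suc m) b" using less.hyps[of "Suc m"] less.prems True by auto
    show ?thesis using G1 G2 less.prems True ih unfolding Erec_def
      by (metis add_right_cancel)
  next
    case False
    show ?thesis using G1 G2 less.prems False unfolding Erec_def by (metis add.right_neutral)
  qed
qed

lemma comm_Erec:
  assumes G: "G \<in> UT (enat N)" and m: "2 \<le> m" "m \<le> N"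
  shows "ut_comm (enat N) G (transv (enat N) 1 m 1) = row1 (enat N) (\<lambda>b. if b = Suc m \<and> Suc m \<le> N then 1 else 0)
     \<longleftrightarrow> (\<forall>b. G m b + (if Suc m \<le> N then G (Suc m) b else 0) = (if b = m then 1 else 0))"
proof -
  have midx: "m \<in> idx (enat N)" using m by (simp add: idx_enat)
  have one: "1 \<in> idx (enat N)" using m by (simp add: idx_enat)
  have t: "transv (enat N) 1 m 1 = row1 (enat N) (\<lambda>b. if b = m then 1 else 0)"
    using m by (intro transv_row1) auto
  have w: "rvec (enat N) (\<lambda>b. if b = Suc m \<and> Suc m \<le> N then (1::'a) else 0)"
    using m by (auto simp: rvec_def idx_enat)
  have v: "rvec (enat N) (\<lambda>b. if b = m then (1::'a) else 0)" by (rule rvec_delta[OF midx m(1)])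
  have vmeq: "vm (\<lambda>k. (if k = Suc m \<and> Suc m \<le> N then 1 else 0) + (if k = m then 1 else 0)) G b
      = G m b + (if Suc m \<le> N then G (Suc m) b else 0)" for b
  proof -
    have "vm (\<lambda>k. (if k = Suc m \<and> Suc m \<le> N then 1 else 0) + (if k = m then 1 else 0)) G b
        = vm (\<lambda>k. if k = Suc m then (if Suc m \<le> N then 1 else 0) else 0) G b + vm (\<lambda>k. if k = m then 1 else 0) G b"
      by (subst vm_add[symmetric]) (rule arg_cong[where f="\<lambda>x. vm x G b"], auto)
    also have "\<dots> = G m b + (if Suc m \<le> N then G (Suc m) b else 0)"
      using UT_upper[OF G] by (simp add: vm_delta)
    finally show ?thesis .
  qed
  show ?thesis unfolding t RR[OF G one v w] vmeq by simp
qed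

lemma halt_comm:
  assumes m: "2 \<le> m" "m \<le> N"
  shows "ut_comm (enat N) (halt N) (transv (enat N) 1 m 1) = row1 (enat N) (\<lambda>b. if b = Suc m \<and> Suc m \<le> N then 1 else (0::'a::field))"
  using comm_Erec[OF halt_UT m] halt_rec[OF m] by blast

lemma shift_sum:
  fixes w v :: "nat \<Rightarrow> 'a::field"
  assumes wv: "\<And>k. w (Suc k) = v k" and w0: "w 0 = 0"
  shows "(\<Sum>k\<in>{..b}. w k * halt N k b) = (\<Sum>k\<in>{..b}. v k * halt N (Suc k) b)"
proof (cases b)
  case 0 then show ?thesis using w0 by (simp add: halt_def)
next
  case (Suc c)
  have "(\<Sum>k\<in>{..b}. w k * halt N k b) = w 0 * halt N 0 b + (\<Sum>k\<in>{..c}. w (Suc k) * halt N (Suc k) b)"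
    unfolding Suc by (rule sum.atMost_Suc_shift)
  also have "\<dots> = (\<Sum>k\<in>{..c}. v k * halt N (Suc k) b)" using w0 wv by simp
  also have "\<dots> = (\<Sum>k\<in>{..b}. v k * halt N (Suc k) b)"
    unfolding Suc by (simp add: halt_low)
  finally show ?thesis .
qed

lemma halt_shift:
  fixes w :: "nat \<Rightarrow> 'a::field"
  assumes w: "rvec (enat N) w" and w2: "w 2 = 0" and N1: "1 \<le> N"
  defines "v \<equiv> (\<lambda>k. if 2 \<le> k \<and> k < N then w (Suc k) else 0)"
  shows "ut_comm (enat N) (halt N) (row1 (enat N) v) = row1 (enat N) w" "rvec (enat N) v"
proof -
  show v: "rvec (enat N) v" unfolding v_def by (auto simp: rvec_def idx_enat)
  have wv: "w (Suc k) = v k" for k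
  proof (cases "2 \<le> k \<and> k < N")
    case True then show ?thesis by (simp add: v_def)
  next
    case False
    then have "k < 2 \<or> N \<le> k" by auto
    then have "w (Suc k) = 0"
    proof
      assume "k < 2" then have "Suc k = 1 \<or> Suc k = 2" by auto
      then show ?thesis using w2 rvec_01[OF w] by (auto simp: numeral_2_eq_2)
    next
      assume "N \<le> k" then show ?thesis using rvecD[OF w, of "Suc k"] by (auto simp: idx_enat)
    qed
    then show ?thesis using False by (simp add: v_def)
  qed
  have one: "1 \<in> idx (enat N)" using N1 by (simp add: idx_enat)
  have "\<forall>b. vm (\<lambda>k. w k + v k) (halt N) b = v b"
  proof
    fix b
    have "vm (\<lambda>k. w k + v k) (halt N) b = (\<Sum>k\<in>{..b}. w k * halt N k b) + (\<Sum>k\<in>{..b}. v k * halt N k b)"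
      by (simp add: vm_def distrib_right sum.distrib)
    also have "\<dots> = (\<Sum>k\<in>{..b}. v k * (halt N k b + halt N (Suc k) b))"
      by (simp add: shift_sum[OF wv rvec_01(1)[OF w]] distrib_left sum.distrib add.commute)
    also have "\<dots> = (\<Sum>k\<in>{..b}. v k * (if b = k then 1 else 0))"
    proof (rule sum.cong[OF refl])
      fix k assume "k \<in> {..b}"
      show "v k * (halt N k b + halt N (Suc k) b) = v k * (if b = k then 1 else 0)"
      proof (cases "v k = 0")
        case False
        then have k: "2 \<le> k" "k < N" by (auto simp: v_def split: if_splits)
        then show ?thesis using halt_rec[of k N b, where 'a='a] by (cases "b = k") simp_all
      qed simp
    qed
    also have "\<dots> = v b" by (subst sum_single[where m=b]) auto
    finally show "vm (\<lambda>k. w k + v k) (halt N) b = v b" .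
  qed
  then show "ut_comm (enat N) (halt N) (row1 (enat N) v) = row1 (enat N) w"
    using RR[OF halt_UT one v w] by simp
qed

context pcm
begin

lemma row_fix_inf:
  assumes ninf: "n = \<infinity>" and w: "rvec n w"
  shows "\<phi> (row1 n w) = row1 n w"
proof -
  obtain v' where v': "rvec n v'" "\<phi> (row1 n w) = row1 n v'"
    "\<And>s. 2 \<le> s \<Longrightarrow> Suc s \<in> idx n \<Longrightarrow> v' s = w s"
    using phi_row1[OF w] by blast
  have "v' = w"
  proof
    fix s show "v' s = w s"
    proof (cases "2 \<le> s")
      case True then show ?thesis using v'(3)[OF True] ninf by (simp add: idx_inf)
    next
      case False
      have "v' s = 0" using rvecD[OF v'(1), of s] False by force
      moreover have "w s = 0" using rvecD[OF w, of s] False by force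
      ultimately show ?thesis by simp
    qed
  qed
  then show ?thesis using v'(2) by simp
qed

lemma row_fix_fin:
  assumes nN: "n = enat N" and w: "rvec n w" and w2: "w 2 = 0"
  shows "\<phi> (row1 n w) = row1 n w"
proof -
  have N1: "1 \<le> N" using n1 nN by (simp add: one_enat_def)
  define v where "v = (\<lambda>k. if 2 \<le> k \<and> k < N then w (Suc k) else 0)"
  have hv: "ut_comm n (halt N) (row1 n v) = row1 n w" and v: "rvec n v"
    using halt_shift[OF w[unfolded nN] w2 N1] unfolding v_def nN by auto
  define H where "H = \<phi> (halt N)"
  have hU: "halt N \<in> UT n" using halt_UT nN by simp
  have HU: "H \<in> UT n" unfolding H_def by (rule phi_UT[OF hU])
  have EH: "Erec N H"
    unfolding Erec_def
  proof (intro allI impI)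
    fix m b assume m: "2 \<le> m" "m \<le> N"
    have midx: "m \<in> idx n" using m nN by (simp add: idx_enat)
    have tU: "transv n 1 m 1 \<in> UT n" using m one midx by (intro transv_UT) auto
    have "ut_comm n H (transv n 1 m 1) = \<phi> (ut_comm n (halt N) (transv n 1 m 1))"
      unfolding H_def using phi_comm[OF hU tU] phi_t[OF one midx, of 1] m by simp
    also have "\<dots> = \<phi> (row1 n (\<lambda>b. if b = Suc m \<and> Suc m \<le> N then 1 else 0))"
      using halt_comm[OF m, where 'a='a] unfolding nN by (rule arg_cong)
    also have "\<dots> = row1 n (\<lambda>b. if b = Suc m \<and> Suc m \<le> N then 1 else 0)"
    proof (cases "Suc m \<le> N")
      case True
      have "Suc m \<in> idx n" using True nN by (simp add: idx_enat)
      then show ?thesis using phi_row1_delta[of "Suc m" 1] m True by simp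
    next
      case False then show ?thesis by (simp add: row1_zero phi_one)
    qed
    finally show "H m b + (if Suc m \<le> N then H (Suc m) b else 0) = (if b = m then 1 else 0)"
      using comm_Erec[OF HU[unfolded nN] m] nN by simp
  qed
  have Hrows: "H k b = halt N k b" if "2 \<le> k" "k \<le> N" for k b
    using Erec_uniq[OF EH Erec_halt that] .
  obtain v' where v': "rvec n v'" "\<phi> (row1 n v) = row1 n v'"
    "\<And>s. 2 \<le> s \<Longrightarrow> Suc s \<in> idx n \<Longrightarrow> v' s = v s"
    using phi_row1[OF v] by blast
  have vN: "v N = 0" by (simp add: v_def)
  have v'v: "v' k = v k + (if k = N then v' N else 0)" for k
  proof (cases "2 \<le> k \<and> k < N")
    case True then show ?thesis using v'(3)[of k] nN by (simp add: idx_enat)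
  next
    case False
    show ?thesis
    proof (cases "k = N")
      case True then show ?thesis using vN by simp
    next
      case kN: False
      have "v' k = 0" using rvecD[OF v'(1), of k] False kN nN by (force simp: idx_enat)
      moreover have "v k = 0" using rvecD[OF v, of k] False kN nN by (force simp: idx_enat)
      ultimately show ?thesis using kN by simp
    qed
  qed
  have wv': "rvec n (\<lambda>k. w k + v' k)" by (rule rvec_add[OF w v'(1)])
  have "ut_comm n H (row1 n v') = row1 n w"
  proof (subst RR[OF HU one v'(1) w], intro allI)
    fix b
    have "vm (\<lambda>k. w k + v' k) H b = vm (\<lambda>k. w k + v' k) (halt N) b"
      unfolding vm_def
    proof (rule sum.cong[OF refl])
      fix k assume "k \<in> {..b}"
      show "(w k + v' k) * H k b = (w k + v' k) * halt N k b"
      proof (cases "w k + v' k = 0")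
        case False
        then have "2 \<le> k \<and> k \<in> idx n" using rvecD[OF wv'] by blast
        then show ?thesis using Hrows[of k b] nN by (simp add: idx_enat)
      qed simp
    qed
    also have "\<dots> = vm (\<lambda>k. w k + v k) (halt N) b + vm (\<lambda>k. if k = N then v' N else 0) (halt N) b"
      by (subst vm_add[symmetric]) (rule arg_cong[where f="\<lambda>x. vm x (halt N) b"], auto simp: v'v)
    also have "\<dots> = v b + v' N * halt N N b"
    proof -
      have "vm (\<lambda>k. w k + v k) (halt N) b = v b"
        using hv RR[OF hU one v w] by simp
      then show ?thesis using UT_upper[OF halt_UT[where 'a='a]] by (simp add: vm_delta)
    qed
    also have "\<dots> = v' b"
      using v'v[of b] N1 by (auto simp: halt_def)
    finally show "vm (\<lambda>k. w k + v' k) H b = v' b" .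
  qed
  moreover have "\<phi> (row1 n w) = ut_comm n H (row1 n v')"
    unfolding H_def using hv phi_comm[OF hU row1_UT[OF one v]] v'(2) by simp
  ultimately show ?thesis by simp
qed

lemma row_fix:
  assumes w: "rvec n w" and w2: "w 2 = 0"
  shows "\<phi> (row1 n w) = row1 n w"
proof (cases n)
  case (enat N) then show ?thesis using row_fix_fin w w2 by blast
next
  case infinity then show ?thesis using row_fix_inf w by blast
qed

end

lemma row_cancel_lt:
  assumes a: "a \<in> UT n" and Z: "Z \<in> UT n"
    and h: "\<And>c. c < l \<Longrightarrow> ut_mult Z a i c = a i c"
  shows "k < l \<Longrightarrow> Z i k = ut_one n i k"
proof -
  let ?x = "\<lambda>k. Z i k - ut_one n i k"
  have x: "?x k \<noteq> 0 \<Longrightarrow> k \<in> idx n" for k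
    using UT_D(2)[OF Z, of i k] by (auto simp: ut_one_def split: if_splits)
  have "vm ?x a c = 0" if "c < l" for c
  proof -
    have e1: "ut_mult Z a i c = vm (\<lambda>k. Z i k) a c" by (rule mult_vm[OF UT_upper[OF Z] UT_upper[OF a]])
    have e2: "ut_mult (ut_one n) a i c = vm (\<lambda>k. ut_one n i k) a c"
      by (rule mult_vm[OF UT_upper[OF one_UT] UT_upper[OF a]])
    have "vm ?x a c = ut_mult Z a i c - ut_mult (ut_one n) a i c"
      by (simp only: vm_diff e1 e2)
    then show ?thesis using h[OF that] a by (simp add: mult_one_left)
  qed
  then show "k < l \<Longrightarrow> Z i k = ut_one n i k"
    using vm_lower[OF a, of ?x l k] x by auto
qed

lemma row_cancel:
  assumes a: "a \<in> UT n" and Z: "Z \<in> UT n"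
    and h: "\<And>c. ut_mult Z a i c = a i c"
  shows "Z i k = ut_one n i k"
  using row_cancel_lt[OF a Z h, where l="Suc k"] by auto

lemma comm_row1_rows:
  fixes a :: "('a::field) mat"
  assumes a: "a \<in> UT n" and one: "1 \<in> idx n" and m: "2 \<le> m" "m \<in> idx n" and i: "2 \<le> i"
  shows "ut_comm n a (transv n 1 m 1) i k = ut_one n i k"
proof -
  let ?t = "transv n 1 m (1::'a)"
  let ?Z = "ut_comm n a ?t"
  have t: "?t = row1 n (\<lambda>b. if b = m then 1 else 0)" using m by (intro transv_row1) auto
  have v: "rvec n (\<lambda>b. if b = m then (1::'a) else 0)" by (rule rvec_delta[OF m(2,1)])
  have tU: "?t \<in> UT n" unfolding t by (rule row1_UT[OF one v])
  have ZU: "?Z \<in> UT n" by (rule comm_UT[OF a tU])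
  have eq: "ut_mult a ?t = ut_mult (ut_mult ?Z ?t) a" using comm_char[OF a tU ZU] by simp
  have M3t: "ut_mult g ?t a' b = g a' b + (if a' = 1 then (if b = m then 1 else 0) else 0)"
    if g: "g \<in> UT n" for g a' b
    unfolding t by (rule M3[OF g one v])
  have "ut_mult ?Z a i c = a i c" for c
  proof -
    have "ut_mult (ut_mult ?Z ?t) a i c = vm (\<lambda>k. ut_mult ?Z ?t i k) a c"
      by (rule mult_vm[OF UT_upper[OF mult_UT[OF ZU tU]] UT_upper[OF a]])
    also have "(\<lambda>k. ut_mult ?Z ?t i k) = (\<lambda>k. ?Z i k)"
      using M3t[OF ZU] i by auto
    also have "vm (\<lambda>k. ?Z i k) a c = ut_mult ?Z a i c"
      by (rule mult_vm[OF UT_upper[OF ZU] UT_upper[OF a], symmetric])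
    finally have "ut_mult (ut_mult ?Z ?t) a i c = ut_mult ?Z a i c" .
    moreover have "ut_mult a ?t i c = a i c" using M3t[OF a] i by auto
    ultimately show ?thesis using eq by metis
  qed
  then show ?thesis by (rule row_cancel[OF a ZU])
qed

context pcm
begin

lemma U2_aux:
  assumes a: "a \<in> UT n" and m: "2 \<le> m" "m \<in> idx n"
  shows "\<exists>x. x m = 1 \<and> (\<forall>k<m. x k = 0) \<and> (\<forall>k. x k \<noteq> 0 \<longrightarrow> k \<in> idx n) \<and> (\<forall>c. vm x a c = vm x (\<phi> a) c)"
proof -
  let ?t = "transv n 1 m (1::'a)"
  let ?Z = "ut_comm n a ?t"
  have t: "?t = row1 n (\<lambda>b. if b = m then 1 else 0)" using m by (intro transv_row1) auto
  have v: "rvec n (\<lambda>b. if b = m then (1::'a) else 0)" by (rule rvec_delta[OF m(2,1)])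
  have tU: "?t \<in> UT n" unfolding t by (rule row1_UT[OF one v])
  have ZU: "?Z \<in> UT n" by (rule comm_UT[OF a tU])
  define wZ where "wZ = (\<lambda>b. if 2 \<le> b then ?Z 1 b else 0)"
  have Zeq: "?Z = row1 n wZ" and wZ: "rvec n wZ"
    using rows_triv_row1[OF ZU one comm_row1_rows[OF a one m]] unfolding wZ_def by auto
  define x where "x = (\<lambda>k. wZ k + (if k = m then 1 else 0))"
  have xs: "x k \<noteq> 0 \<Longrightarrow> k \<in> idx n" for k
    using rvec_idx[OF rvec_add[OF wZ v]] unfolding x_def by blast
  have vma: "\<forall>b. vm x a b = (if b = m then 1 else 0)"
    using RR[OF a one v wZ] Zeq unfolding t x_def by simp
  have xlow: "\<forall>k<m. x k = 0"
    using vm_lower[OF a, of x m] xs vma by auto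
  have xm: "x m = 1"
  proof -
    have "vm x a m = x m * a m m"
      unfolding vm_def by (rule sum_single) (use xlow in auto)
    then show ?thesis using vma UT_diag[OF a m(2)] by simp
  qed
  have w2: "wZ 2 = 0"
  proof (cases "m = 2")
    case True then show ?thesis using xm unfolding x_def by simp
  next
    case False then have "2 < m" using m by simp
    then show ?thesis using xlow unfolding x_def by auto
  qed
  have "\<phi> ?Z = row1 n wZ" using Zeq row_fix[OF wZ w2] by simp
  moreover have "\<phi> ?Z = ut_comm n (\<phi> a) ?t" using phi_comm[OF a tU] phi_t[OF one m(2)] m by simp
  ultimately have "ut_comm n (\<phi> a) (row1 n (\<lambda>b. if b = m then 1 else 0)) = row1 n wZ" unfolding t by simp
  then have vmb: "\<forall>b. vm x (\<phi> a) b = (if b = m then 1 else 0)"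
    using RR[OF phi_UT[OF a] one v wZ] unfolding x_def by simp
  show ?thesis using xm xlow xs vma vmb by metis
qed

lemma U2:
  assumes a: "a \<in> UT n" shows "2 \<le> m \<Longrightarrow> \<phi> a m c = a m c"
proof (induction "c - m" arbitrary: m rule: less_induct)
  case less
  have pa: "\<phi> a \<in> UT n" by (rule phi_UT[OF a])
  show ?case
  proof (cases "m \<in> idx n \<and> m \<le> c")
    case False
    then show ?thesis using a pa by (auto simp: UT_nidx1 UT_lt0)
  next
    case True
    obtain x where x: "x m = 1" "\<forall>k<m. x k = 0" "\<forall>c. vm x a c = vm x (\<phi> a) c"
      using U2_aux[OF a less.prems] True by blast
    have "0 = vm x a c - vm x (\<phi> a) c" using x by simp
    also have "\<dots> = vm (\<lambda>k. x k * (a k c - \<phi> a k c)) (\<lambda>_ _. 1) c"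
      by (simp add: vm_def sum_subtractf right_diff_distrib)
    also have "\<dots> = x m * (a m c - \<phi> a m c) * 1"
      unfolding vm_def
    proof (rule sum_single)
      fix k assume k: "k \<in> {..c}" "k \<noteq> m"
      show "x k * (a k c - \<phi> a k c) * 1 = 0"
      proof (cases "k < m")
        case True then show ?thesis using x by simp
      next
        case False
        then have "c - k < c - m" "2 \<le> k" using k less.prems True by auto
        then show ?thesis using less.hyps by simp
      qed
    qed (use True in auto)
    finally show ?thesis using x by simp
  qed
qed

end

lemma colm_commute:
  fixes v :: "nat \<Rightarrow> 'a::field"
  assumes q: "q \<in> idx n" and v: "cvec q v" and s: "s \<in> idx n" "r \<in> idx n" "s < r" "s \<noteq> q"
    and vr: "v r = 0"
  shows "ut_mult (colm n q v) (transv n s r 1) = ut_mult (transv n s r 1) (colm n q v)"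
proof -
  have t: "transv n s r (1::'a) = colm n r (\<lambda>a. if a = s then 1 else 0)" using s by (intro transv_colm) auto
  have cd: "cvec r (\<lambda>a. if a = s then (1::'a) else 0)" using s by (intro cvec_delta) (auto simp: idx_def)
  have KU: "colm n q v \<in> UT n" by (rule colm_UT[OF q v])
  show ?thesis
  proof (rule ext, rule ext)
    fix a c
    have l: "ut_mult (colm n q v) (transv n s r 1) a c = colm n q v a c + (if c = r then colm n q v a s else 0)"
      unfolding t M1[OF KU cd] using s by (simp add: mv_delta)
    have rr: "ut_mult (transv n s r 1) (colm n q v) a c = colm n q v a c + (if a = s then 1 else 0) * colm n q v r c"
      unfolding t by (rule M2[OF KU cd])
    show "ut_mult (colm n q v) (transv n s r 1) a c = ut_mult (transv n s r 1) (colm n q v) a c"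
      unfolding l rr using s vr by (auto simp: colm_def ut_one_def)
  qed
qed

definition shiftm :: "enat \<Rightarrow> nat \<Rightarrow> ('a::field) mat" where
  "shiftm n q a b = ut_one n a b + (if 1 \<le> a \<and> Suc a < q \<and> b = Suc a then 1 else 0)"

lemma shiftm_UT:
  assumes q: "q \<in> idx n" shows "(shiftm n q :: ('a::field) mat) \<in> UT n"
proof (rule UT_I)
  fix i j assume h: "(shiftm n q i j :: 'a) \<noteq> 0"
  show "i \<in> idx n \<and> j \<in> idx n \<and> i \<le> j"
  proof (cases "1 \<le> i \<and> Suc i < q \<and> j = Suc i")
    case True then show ?thesis using idx_le[OF q, of i] idx_le[OF q, of j] by auto
  next
    case False
    then have "(shiftm n q i j :: 'a) = ut_one n i j" by (simp add: shiftm_def)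
    then have "(ut_one n i j :: 'a) \<noteq> 0" using h by metis
    then show ?thesis by (auto simp: ut_one_def split: if_splits)
  qed
next
  fix i assume "i \<in> idx n" then show "shiftm n q i i = 1" by (simp add: shiftm_def ut_one_def)
qed

lemma shiftm_row: "b \<noteq> q \<Longrightarrow> shiftm n q q b = 0"
  by (simp add: shiftm_def ut_one_def)

lemma shiftm_mv:
  fixes v :: "nat \<Rightarrow> 'a::field"
  assumes q: "q \<in> idx n" and v: "cvec q v"
  shows "mv q (shiftm n q) v a = v a + (if 1 \<le> a \<and> Suc a < q then v (Suc a) else 0)"
proof -
  have "mv q (shiftm n q) v a = (\<Sum>k\<in>{..q}. ut_one n a k * v k + (if k = Suc a then (if 1 \<le> a \<and> Suc a < q then v k else 0) else 0))"
    unfolding mv_def shiftm_def by (rule sum.cong[OF refl]) (auto simp: distrib_right)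
  also have "\<dots> = (\<Sum>k\<in>{..q}. ut_one n a k * v k) + (\<Sum>k\<in>{..q}. if k = Suc a then (if 1 \<le> a \<and> Suc a < q then v k else 0) else 0)"
    by (simp add: sum.distrib)
  also have "(\<Sum>k\<in>{..q}. ut_one n a k * v k) = v a"
  proof (cases "v a = 0")
    case True
    then show ?thesis by (simp, intro sum.neutral) (auto simp: ut_one_def True)
  next
    case False
    then have a: "1 \<le> a" "a < q" using cvecD[OF v] by auto
    then have "a \<in> idx n" using idx_le[OF q] by auto
    then show ?thesis using a by (subst sum_single[where m=a]) (auto simp: ut_one_def)
  qed
  also have "(\<Sum>k\<in>{..q}. if k = Suc a then (if 1 \<le> a \<and> Suc a < q then v k else 0) else 0)
      = (if 1 \<le> a \<and> Suc a < q then v (Suc a) else 0)"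
    by (simp add: sum.delta)
  finally show ?thesis .
qed

context pcm
begin

lemma phi_colm_form:
  assumes q: "q \<in> idx n" "2 \<le> q" and Pq: "\<And>s. s \<in> idx n \<Longrightarrow> q < s \<Longrightarrow> Suc s \<in> idx n"
    and v: "cvec q v"
  shows "\<exists>\<theta>. \<phi> (colm n q v) = colm n q (\<lambda>a. v a + (if a = 1 then \<theta> else 0))"
proof -
  let ?K = "colm n q v"
  have KU: "?K \<in> UT n" by (rule colm_UT[OF q(1) v])
  define y where "y = \<phi> ?K"
  have yU: "y \<in> UT n" unfolding y_def by (rule phi_UT[OF KU])
  have y1: "y 1 b = ut_one n 1 b" if b: "b \<noteq> q" for b
  proof (cases "2 \<le> b \<and> b \<in> idx n")
    case False
    then have "b = 0 \<or> b = 1 \<or> b \<notin> idx n" by auto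
    then show ?thesis using yU one by (auto simp: UT_col0 UT_diag UT_nidx2 ut_one_def)
  next
    case True
    define r where "r = (if b < q then q else Suc b)"
    have r: "r \<in> idx n" "b < r" "q \<le> r" using True b Pq[of b] q unfolding r_def by auto
    have tU: "transv n b r 1 \<in> UT n" using True r by (intro transv_UT) auto
    have "ut_mult ?K (transv n b r 1) = ut_mult (transv n b r 1) ?K"
      using colm_commute[OF q(1) v _ r(1,2)] True b cvec_q[OF v r(3)] by blast
    then have "ut_comm n ?K (transv n b r 1) = ut_one n" using comm_eq_one[OF KU tU] by simp
    then have "ut_comm n y (transv n b r 1) = ut_one n"
      using phi_comm[OF KU tU] phi_t[of b r 1] True r phi_one unfolding y_def by simp
    then have comm: "ut_mult y (transv n b r 1) = ut_mult (transv n b r 1) y" using comm_eq_one[OF yU tU] by simp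
    have t: "transv n b r (1::'a) = colm n r (\<lambda>a. if a = b then 1 else 0)" using r by (intro transv_colm) auto
    have cd: "cvec r (\<lambda>a. if a = b then (1::'a) else 0)" using True r by (intro cvec_delta) auto
    have "ut_mult y (transv n b r 1) 1 r = y 1 r + y 1 b"
      unfolding t M1[OF yU cd] using r by (simp add: mv_delta)
    moreover have "ut_mult (transv n b r 1) y 1 r = y 1 r"
      unfolding t M2[OF yU cd] using True by simp
    ultimately have "y 1 b = 0" using comm by simp
    then show ?thesis using True by (simp add: ut_one_def)
  qed
  define \<theta> where "\<theta> = y 1 q - v 1"
  have "y = colm n q (\<lambda>a. v a + (if a = 1 then \<theta> else 0))"
  proof (rule ext, rule ext)
    fix a b
    show "y a b = colm n q (\<lambda>a. v a + (if a = 1 then \<theta> else 0)) a b"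
    proof (cases "2 \<le> a")
      case True
      then have "y a b = ?K a b" using U2[OF KU True] unfolding y_def by simp
      then show ?thesis using True by (simp add: colm_def)
    next
      case False
      then have "a = 0 \<or> a = 1" by auto
      then show ?thesis
      proof
        assume "a = 0" then show ?thesis using yU cvec_0[OF v] by (simp add: UT_row0 colm_def ut_one_def)
      next
        assume a1: "a = 1"
        show ?thesis
        proof (cases "b = q")
          case True then show ?thesis using a1 q by (simp add: colm_def \<theta>_def ut_one_def)
        next
          case False then show ?thesis using a1 y1[OF False] by (simp add: colm_def)
        qed
      qed
    qed
  qed
  then show ?thesis unfolding y_def by blast
qed

lemma Col:
  assumes q: "q \<in> idx n" and Pq: "\<And>s. s \<in> idx n \<Longrightarrow> q < s \<Longrightarrow> Suc s \<in> idx n"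
    and p: "cvec q p" and p2: "\<And>a. p a \<noteq> 0 \<Longrightarrow> Suc a < q"
  shows "\<phi> (colm n q p) = colm n q p"
proof (cases "2 \<le> q")
  case False
  then have "p = (\<lambda>_. 0)" using cvecD[OF p] by fastforce
  then show ?thesis by (simp add: colm_zero phi_one)
next
  case q2: True
  let ?S = "shiftm n q :: 'a mat"
  have SU: "?S \<in> UT n" by (rule shiftm_UT[OF q])
  have PSU: "\<phi> ?S \<in> UT n" by (rule phi_UT[OF SU])
  have Srow: "?S q b = 0" if "b \<noteq> q" for b using that by (rule shiftm_row)
  have PSrow: "\<phi> ?S q b = 0" if "b \<noteq> q" for b using U2[OF SU q2] Srow[OF that] by simp
  define v where "v = (\<lambda>a. if 2 \<le> a \<and> a < q then p (a - 1) else 0)"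
  have v: "cvec q v" unfolding v_def cvec_def by auto
  have hp: "p a = (if 1 \<le> a \<and> Suc a < q then v (Suc a) else 0)" for a
  proof (cases "1 \<le> a \<and> Suc a < q")
    case True then show ?thesis by (simp add: v_def)
  next
    case False then show ?thesis using cvecD[OF p, of a] p2[of a] by auto
  qed
  have c1: "ut_comm n ?S (colm n q v) = colm n q p"
    using CL[OF SU q Srow v p] shiftm_mv[OF q v] hp by simp
  have PS1: "\<phi> ?S 1 s = ?S 1 s" if s: "2 \<le> s" "s < q" for s
  proof -
    let ?ds = "\<lambda>a. if a = s then (1::'a) else 0"
    let ?ds1 = "\<lambda>a. if a = s - 1 then (1::'a) else 0"
    have cds: "cvec q ?ds" using s by (intro cvec_delta) auto
    have cds1: "cvec q ?ds1" using s by (intro cvec_delta) auto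
    have sidx: "s \<in> idx n" using idx_le[OF q, of s] s by auto
    have "\<forall>a. mv q ?S ?ds a = ?ds1 a + ?ds a"
    proof
      fix a
      have "mv q ?S ?ds a = ?S a s" using s by (simp add: mv_delta)
      also have "\<dots> = ?ds1 a + ?ds a" using s sidx by (auto simp: shiftm_def ut_one_def)
      finally show "mv q ?S ?ds a = ?ds1 a + ?ds a" .
    qed
    then have "ut_comm n ?S (colm n q ?ds) = colm n q ?ds1" using CL[OF SU q Srow cds cds1] by simp
    then have "ut_comm n (\<phi> ?S) (colm n q ?ds) = colm n q ?ds1"
      using phi_comm[OF SU colm_UT[OF q cds]] phi_colm_delta[OF q, of s 1] phi_colm_delta[OF q, of "s - 1" 1] s
      by simp
    then have "\<forall>a. mv q (\<phi> ?S) ?ds a = ?ds1 a + ?ds a" using CL[OF PSU q PSrow cds cds1] by simp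
    then have "mv q (\<phi> ?S) ?ds 1 = ?ds1 1 + ?ds 1" by blast
    then have "\<phi> ?S 1 s = ?ds1 1 + ?ds 1" using s by (simp add: mv_delta)
    then show ?thesis using s by (auto simp: shiftm_def ut_one_def)
  qed
  have agree: "\<phi> ?S a k = ?S a k" if k: "k < q" for a k
  proof (cases "2 \<le> a")
    case True then show ?thesis using U2[OF SU True] by simp
  next
    case False
    then have "a = 0 \<or> a = 1" by auto
    then show ?thesis
    proof
      assume "a = 0" then show ?thesis using SU PSU by (simp add: UT_row0)
    next
      assume a1: "a = 1"
      show ?thesis
      proof (cases "2 \<le> k")
        case True then show ?thesis using PS1[OF True k] a1 by simp
      next
        case False
        then have "k = 0 \<or> k = 1" by auto
        then show ?thesis using SU PSU one a1 by (auto simp: UT_col0 UT_diag)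
      qed
    qed
  qed
  obtain \<theta> where th: "\<phi> (colm n q v) = colm n q (\<lambda>a. v a + (if a = 1 then \<theta> else 0))"
    using phi_colm_form[OF q q2 Pq v] by blast
  let ?v' = "\<lambda>a. v a + (if a = 1 then \<theta> else 0)"
  have v': "cvec q ?v'" using v q2 unfolding cvec_def by auto
  have "\<forall>a. mv q (\<phi> ?S) ?v' a = p a + ?v' a"
  proof
    fix a
    have "mv q (\<phi> ?S) ?v' a = mv q ?S ?v' a"
      unfolding mv_def
    proof (rule sum.cong[OF refl])
      fix k assume "k \<in> {..q}"
      show "\<phi> ?S a k * ?v' k = ?S a k * ?v' k"
      proof (cases "k < q")
        case True then show ?thesis using agree by simp
      next
        case False then show ?thesis using cvec_q[OF v', of k] by simp
      qed
    qed
    also have "\<dots> = ?v' a + (if 1 \<le> a \<and> Suc a < q then ?v' (Suc a) else 0)"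
      by (rule shiftm_mv[OF q v'])
    also have "\<dots> = p a + ?v' a" using hp[of a] by simp
    finally show "mv q (\<phi> ?S) ?v' a = p a + ?v' a" .
  qed
  then have c2: "ut_comm n (\<phi> ?S) (colm n q ?v') = colm n q p" using CL[OF PSU q PSrow v' p] by simp
  have "\<phi> (colm n q p) = ut_comm n (\<phi> ?S) (\<phi> (colm n q v))"
    using c1 phi_comm[OF SU colm_UT[OF q v]] by simp
  also have "\<dots> = colm n q p" using th c2 by simp
  finally show ?thesis .
qed

end

lemma Zprops:
  fixes g :: "('a::field) mat"
  assumes g: "g \<in> UT n" and m: "1 \<le> m" "Suc m \<in> idx n"
  shows "\<And>i c. m < i \<Longrightarrow> ut_comm n g (transv n m (Suc m) 1) i c = ut_one n i c"
    and "2 \<le> m \<Longrightarrow> ut_comm n g (transv n m (Suc m) 1) 1 (Suc m) = g 1 m"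
proof -
  let ?l = "Suc m"
  let ?t = "transv n m ?l (1::'a)"
  let ?Z = "ut_comm n g ?t"
  have midx: "m \<in> idx n" using idx_le[OF m(2), of m] m by auto
  have t: "?t = colm n ?l (\<lambda>a. if a = m then 1 else 0)" by (intro transv_colm) auto
  have cd: "cvec ?l (\<lambda>a. if a = m then (1::'a) else 0)" using m by (intro cvec_delta) auto
  have tU: "?t \<in> UT n" using midx m by (intro transv_UT) auto
  have ZU: "?Z \<in> UT n" by (rule comm_UT[OF g tU])
  have eq: "ut_mult g ?t = ut_mult (ut_mult ?Z ?t) g" using comm_char[OF g tU ZU] by simp
  have M1t: "ut_mult h ?t i c = h i c + (if c = ?l then h i m else 0)" if h: "h \<in> UT n" for h i c
    unfolding t M1[OF h cd] by (simp add: mv_delta)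
  have ZTg: "ut_mult (ut_mult ?Z ?t) g i c = vm (\<lambda>k. ut_mult ?Z ?t i k) g c" for i c
    by (rule mult_vm[OF UT_upper[OF mult_UT[OF ZU tU]] UT_upper[OF g]])
  have Zg: "ut_mult ?Z g i c = vm (\<lambda>k. ?Z i k) g c" for i c
    by (rule mult_vm[OF UT_upper[OF ZU] UT_upper[OF g]])
  show Z1: "?Z i c = ut_one n i c" if i: "m < i" for i c
  proof -
    have "ut_mult ?Z g i c = g i c" for c
    proof -
      have "g i c = ut_mult g ?t i c" using M1t[OF g] UT_lt0[OF g i] by simp
      also have "\<dots> = vm (\<lambda>k. ut_mult ?Z ?t i k) g c" using eq ZTg by metis
      also have "(\<lambda>k. ut_mult ?Z ?t i k) = (\<lambda>k. ?Z i k)" using M1t[OF ZU] UT_lt0[OF ZU i] by (intro ext) simp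
      finally show ?thesis using Zg by simp
    qed
    then show ?thesis by (rule row_cancel[OF g ZU])
  qed
  have Zc: "?Z i k = ut_one n i k" if k: "k < ?l" for i k
  proof -
    have "ut_mult ?Z g i c = g i c" if c: "c < ?l" for c
    proof -
      have "g i c = ut_mult g ?t i c" using M1t[OF g] c by simp
      also have "\<dots> = vm (\<lambda>k. ut_mult ?Z ?t i k) g c" using eq ZTg by metis
      also have "\<dots> = vm (\<lambda>k. ?Z i k) g c"
        unfolding vm_def using c by (intro sum.cong) (auto simp: M1t[OF ZU])
      finally show ?thesis using Zg by simp
    qed
    then show ?thesis using row_cancel_lt[OF g ZU _ k] by blast
  qed
  assume m2: "2 \<le> m"
  have "g 1 ?l + g 1 m = ut_mult g ?t 1 ?l" using M1t[OF g] by simp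
  also have "\<dots> = vm (\<lambda>k. ut_mult ?Z ?t 1 k) g ?l" using eq ZTg by metis
  also have "\<dots> = ut_mult ?Z ?t 1 ?l * g ?l ?l + (\<Sum>k\<in>{..<?l}. ut_mult ?Z ?t 1 k * g k ?l)"
    unfolding vm_def by (simp add: atMost_Suc lessThan_Suc_atMost[symmetric])
  also have "ut_mult ?Z ?t 1 ?l = ?Z 1 ?l" using M1t[OF ZU, of 1 ?l] Zc[of m 1] m2 by (simp add: ut_one_def)
  also have "g ?l ?l = 1" by (rule UT_diag[OF g m(2)])
  also have "(\<Sum>k\<in>{..<?l}. ut_mult ?Z ?t 1 k * g k ?l) = (\<Sum>k\<in>{..<?l}. ut_one n 1 k * g k ?l)"
    by (intro sum.cong) (auto simp: M1t[OF ZU] Zc)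
  also have "\<dots> = g 1 ?l" by (rule sum_one_left[OF g]) (use m in auto)
  finally show "?Z 1 ?l = g 1 m" by simp
qed

context pcm
begin

lemma colrule_fin:
  assumes nN: "n = enat N" and a: "a \<in> UT n" and b: "b < N"
  shows "\<phi> a i b = a i b"
proof (cases "b = 0")
  case True then show ?thesis using a phi_UT[OF a] by (simp add: UT_col0)
next
  case False
  have bidx: "b \<in> idx n" and Nidx: "N \<in> idx n" using False b nN by (auto simp: idx_enat)
  have rowN: "(h :: 'a mat) N c = 0" if h: "h \<in> UT n" and c: "c \<noteq> N" for h c
  proof (rule ccontr)
    assume "h N c \<noteq> 0"
    then have "N \<le> c" "c \<in> idx n" using UT_D[OF h] by auto
    then show False using c nN by (auto simp: idx_enat)
  qed
  let ?db = "\<lambda>a. if a = b then (1::'a) else 0"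
  have cdb: "cvec N ?db" using False b by (intro cvec_delta) auto
  define u where "u = (\<lambda>i. a i b - ut_one n i b)"
  have uprop: "1 \<le> i \<and> i < b" if "u i \<noteq> 0" for i
  proof -
    have "a i b \<noteq> ut_one n i b" using that unfolding u_def by simp
    then have "a i b \<noteq> 0 \<or> (ut_one n i b :: 'a) \<noteq> 0" by auto
    moreover have "i \<noteq> b" using UT_diag[OF a bidx] bidx \<open>a i b \<noteq> ut_one n i b\<close> by (auto simp: ut_one_def)
    ultimately show ?thesis using UT_D[OF a, of i b] by (auto simp: ut_one_def idx_def split: if_splits)
  qed
  have u: "cvec N u" unfolding cvec_def using uprop b by fastforce
  have u2: "Suc i < N" if "u i \<noteq> 0" for i using uprop[OF that] b by simp
  have c1: "ut_comm n a (colm n N ?db) = colm n N u"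
    using CL[OF a Nidx rowN[OF a] cdb u] b bidx by (simp add: mv_delta u_def ut_one_def)
  have fix_u: "\<phi> (colm n N u) = colm n N u"
    by (rule Col[OF Nidx _ u u2]) (use nN in \<open>auto simp: idx_enat\<close>)
  have "ut_comm n (\<phi> a) (colm n N ?db) = colm n N u"
    using phi_comm[OF a colm_UT[OF Nidx cdb]] phi_colm_delta[OF Nidx, of b 1] c1 fix_u False b by simp
  then have "\<forall>i. mv N (\<phi> a) ?db i = u i + ?db i"
    using CL[OF phi_UT[OF a] Nidx rowN[OF phi_UT[OF a]] cdb u] by simp
  then have "mv N (\<phi> a) ?db i = u i + ?db i" by blast
  then show ?thesis using b bidx by (simp add: mv_delta u_def ut_one_def)
qed

lemma Mroute:
  assumes ninf: "n = \<infinity>" and a: "a \<in> UT n" and m: "2 \<le> m"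
  shows "\<phi> a 1 m = a 1 m"
proof -
  let ?l = "Suc m" and ?q = "Suc (Suc m)"
  have idxs: "m \<in> idx n" "?l \<in> idx n" "?q \<in> idx n" using m ninf by (auto simp: idx_inf)
  let ?t = "transv n m ?l (1::'a)"
  have tU: "?t \<in> UT n" using idxs by (intro transv_UT) auto
  let ?M = "ut_comm n a ?t" and ?M' = "ut_comm n (\<phi> a) ?t"
  have MU: "?M \<in> UT n" by (rule comm_UT[OF a tU])
  have M'U: "?M' \<in> UT n" by (rule comm_UT[OF phi_UT[OF a] tU])
  have phiM: "\<phi> ?M = ?M'" using phi_comm[OF a tU] phi_t[OF idxs(1,2)] by simp
  have m1: "1 \<le> m" using m by simp
  have Mrow: "?M ?q c = 0" if "c \<noteq> ?q" for c using Zprops(1)[OF a m1 idxs(2), of ?q c] that by (simp add: ut_one_def)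
  have M'row: "?M' ?q c = 0" if "c \<noteq> ?q" for c
    using Zprops(1)[OF phi_UT[OF a] m1 idxs(2), of ?q c] that by (simp add: ut_one_def)
  let ?dl = "\<lambda>a. if a = ?l then (1::'a) else 0"
  have cdl: "cvec ?q ?dl" by (intro cvec_delta) auto
  define u where "u = (\<lambda>i. ?M i ?l - ut_one n i ?l)"
  have uprop: "1 \<le> i \<and> i \<le> m" if "u i \<noteq> 0" for i
  proof -
    have ne: "?M i ?l \<noteq> ut_one n i ?l" using that unfolding u_def by simp
    have "i \<noteq> ?l" using UT_diag[OF MU idxs(2)] idxs ne by (auto simp: ut_one_def)
    moreover have "?M i ?l \<noteq> 0" using ne \<open>i \<noteq> ?l\<close> by (auto simp: ut_one_def)
    ultimately show ?thesis using UT_D[OF MU, of i ?l] by (auto simp: idx_def)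
  qed
  have u: "cvec ?q u" unfolding cvec_def using uprop by fastforce
  have u2: "Suc i < ?q" if "u i \<noteq> 0" for i using uprop[OF that] by simp
  have c1: "ut_comm n ?M (colm n ?q ?dl) = colm n ?q u"
    using CL[OF MU idxs(3) Mrow cdl u] idxs by (simp add: mv_delta u_def ut_one_def)
  have fix_u: "\<phi> (colm n ?q u) = colm n ?q u"
    by (rule Col[OF idxs(3) _ u u2]) (use ninf in \<open>auto simp: idx_inf\<close>)
  have "ut_comm n ?M' (colm n ?q ?dl) = colm n ?q u"
    using phi_comm[OF MU colm_UT[OF idxs(3) cdl]] phi_colm_delta[OF idxs(3), of ?l 1] c1 fix_u phiM by simp
  then have "\<forall>i. mv ?q ?M' ?dl i = u i + ?dl i" using CL[OF M'U idxs(3) M'row cdl u] by simp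
  then have "mv ?q ?M' ?dl 1 = u 1 + ?dl 1" by blast
  then have "?M' 1 ?l = ?M 1 ?l" using m by (simp add: mv_delta u_def ut_one_def)
  then show ?thesis using Zprops(2)[OF a m1 idxs(2) m] Zprops(2)[OF phi_UT[OF a] m1 idxs(2) m] by simp
qed

end

lemma one_center: "ut_one n \<in> ut_center n"
  unfolding ut_center_def using one_UT mult_one_left mult_one_right by fastforce

lemma transv_center:
  assumes nN: "n = enat N" and N2: "2 \<le> N"
  shows "transv n 1 N (\<gamma>::'a::field) \<in> ut_center n"
    and "\<And>x. x \<in> UT n \<Longrightarrow> ut_mult x (transv n 1 N \<gamma>) i c = x i c + (if i = 1 \<and> c = N then \<gamma> else 0)"
proof -
  have idxs: "1 \<in> idx n" "N \<in> idx n" using nN N2 by (auto simp: idx_enat)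
  have t: "transv n 1 N \<gamma> = colm n N (\<lambda>a. if a = 1 then \<gamma> else 0)" using N2 by (intro transv_colm) auto
  have cd: "cvec N (\<lambda>a. if a = 1 then \<gamma> else 0)" using N2 by (intro cvec_delta) auto
  have tU: "transv n 1 N \<gamma> \<in> UT n" using idxs N2 by (intro transv_UT) auto
  have R: "ut_mult x (transv n 1 N \<gamma>) i c = x i c + (if i = 1 \<and> c = N then \<gamma> else 0)" if x: "x \<in> UT n" for x i c
  proof -
    have "ut_mult x (transv n 1 N \<gamma>) i c = x i c + (if c = N then x i 1 * \<gamma> else 0)"
      unfolding t M1[OF x cd] using N2 by (simp add: mv_delta)
    moreover have "x i 1 = (if i = 1 then 1 else 0)" using UT_col1[OF x] UT_diag[OF x idxs(1)] by auto
    ultimately show ?thesis by auto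
  qed
  then show "\<And>x. x \<in> UT n \<Longrightarrow> ut_mult x (transv n 1 N \<gamma>) i c = x i c + (if i = 1 \<and> c = N then \<gamma> else 0)" .
  have L: "ut_mult (transv n 1 N \<gamma>) x i c = x i c + (if i = 1 \<and> c = N then \<gamma> else 0)" if x: "x \<in> UT n" for x i c
  proof -
    have "ut_mult (transv n 1 N \<gamma>) x i c = x i c + (if i = 1 then \<gamma> else 0) * x N c"
      unfolding t by (rule M2[OF x cd])
    moreover have "x N c = (if c = N then 1 else 0)"
    proof (cases "c = N")
      case True then show ?thesis using UT_diag[OF x idxs(2)] by simp
    next
      case False
      have "x N c = 0"
      proof (rule ccontr)
        assume "x N c \<noteq> 0"
        then have "N \<le> c" "c \<in> idx n" using UT_D[OF x] by auto
        then show False using False nN by (auto simp: idx_enat)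
      qed
      then show ?thesis using False by simp
    qed
    ultimately show ?thesis by auto
  qed
  show "transv n 1 N \<gamma> \<in> ut_center n"
    unfolding ut_center_def using tU R L by (auto intro!: ext)
qed

theorem mainTheorem12:
  fixes n :: enat and \<phi> :: "('a::field) mat \<Rightarrow> 'a mat"
  assumes "n \<ge> 1"
    and "PC_map n \<phi>"
    and "almost_identity n \<phi>"
  shows "(\<exists>f. \<forall>a \<in> UT n. f a \<in> ut_center n \<and> \<phi> a = ut_mult a (f a))
         \<and> (\<forall>m. n = enat m \<and> m \<ge> 2 \<longrightarrow>
              (\<exists>f :: 'a mat \<Rightarrow> 'a. \<forall>a \<in> UT n. \<phi> a = ut_mult a (transv n 1 m (f a))))
         \<and> (n = \<infinity> \<longrightarrow> (\<forall>a \<in> UT n. \<phi> a = a))"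
proof -
  interpret P: pcm n \<phi> by (rule pcm.intro) (rule assms)+
  show ?thesis
  proof (cases n)
    case (enat N)
    have N1: "1 \<le> N" using assms(1) enat by (simp add: one_enat_def)
    have ent: "\<phi> a i c = a i c" if a: "a \<in> UT n" and ic: "\<not> (i = 1 \<and> c = N)" for a i c
    proof (cases "2 \<le> i")
      case True then show ?thesis using P.U2[OF a] by simp
    next
      case False
      then have "i = 0 \<or> i = 1" by auto
      then show ?thesis
      proof
        assume "i = 0" then show ?thesis using a P.phi_UT[OF a] by (simp add: UT_row0)
      next
        assume i1: "i = 1"
        show ?thesis
        proof (cases "c < N")
          case True then show ?thesis using P.colrule_fin[OF enat a True] by simp
        next
          case False
          then have "c \<notin> idx n" using ic i1 enat by (auto simp: idx_enat)
          then show ?thesis using a P.phi_UT[OF a] by (simp add: UT_nidx2)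
        qed
      qed
    qed
    have mainN: "\<phi> a = ut_mult a (transv n 1 N (\<phi> a 1 N - a 1 N))" if a: "a \<in> UT n" and N2: "2 \<le> N" for a
    proof (rule ext, rule ext)
      fix i c
      show "\<phi> a i c = ut_mult a (transv n 1 N (\<phi> a 1 N - a 1 N)) i c"
        using transv_center(2)[OF enat N2 a, where i=i and c=c and \<gamma>="\<phi> a 1 N - a 1 N"] ent[OF a, of i c] by auto
    qed
    have main1: "\<phi> a = a" if a: "a \<in> UT n" and N: "N = 1" for a
    proof (rule ext, rule ext)
      fix i c
      show "\<phi> a i c = a i c"
      proof (cases "i = 1 \<and> c = N")
        case True
        then show ?thesis using UT_diag[OF a P.one] UT_diag[OF P.phi_UT[OF a] P.one] N by simp
      qed (use ent[OF a] in auto)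
    qed
    have p1: "\<exists>f. \<forall>a \<in> UT n. f a \<in> ut_center n \<and> \<phi> a = ut_mult a (f a)"
    proof (cases "2 \<le> N")
      case True
      show ?thesis
        by (rule exI[of _ "\<lambda>a. transv n 1 N (\<phi> a 1 N - a 1 N)"])
           (use transv_center(1)[OF enat True] mainN True in auto)
    next
      case False
      then have "N = 1" using N1 by simp
      then show ?thesis by (intro exI[of _ "\<lambda>a. ut_one n :: 'a mat"]) (auto simp: main1 one_center mult_one_right)
    qed
    have p2: "\<forall>m. n = enat m \<and> m \<ge> 2 \<longrightarrow>
              (\<exists>f :: 'a mat \<Rightarrow> 'a. \<forall>a \<in> UT n. \<phi> a = ut_mult a (transv n 1 m (f a)))"
    proof (intro allI impI)
      fix m assume m: "n = enat m \<and> 2 \<le> m"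
      then have "m = N" using enat by simp
      then show "\<exists>f :: 'a mat \<Rightarrow> 'a. \<forall>a \<in> UT n. \<phi> a = ut_mult a (transv n 1 m (f a))"
        using mainN m by (intro exI[of _ "\<lambda>a. \<phi> a 1 N - a 1 N"]) auto
    qed
    show ?thesis using p1 p2 enat by simp
  next
    case infinity
    have ent: "\<phi> a = a" if a: "a \<in> UT n" for a
    proof (rule ext, rule ext)
      fix i c
      show "\<phi> a i c = a i c"
      proof (cases "2 \<le> i")
        case True then show ?thesis using P.U2[OF a] by simp
      next
        case False
        then have "i = 0 \<or> i = 1" by auto
        then show ?thesis
        proof
          assume "i = 0" then show ?thesis using a P.phi_UT[OF a] by (simp add: UT_row0)
        next
          assume i1: "i = 1"
          show ?thesis
          proof (cases "2 \<le> c")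
            case True then show ?thesis using P.Mroute[OF infinity a True] i1 by simp
          next
            case False
            then have "c = 0 \<or> c = 1" by auto
            then show ?thesis using a P.phi_UT[OF a] i1 P.one by (auto simp: UT_col0 UT_diag)
          qed
        qed
      qed
    qed
    have p1: "\<exists>f. \<forall>a \<in> UT n. f a \<in> ut_center n \<and> \<phi> a = ut_mult a (f a)"
      by (intro exI[of _ "\<lambda>a. ut_one n :: 'a mat"]) (auto simp: ent one_center mult_one_right)
    show ?thesis using p1 ent infinity by simp
  qed
qed


end
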